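(* Let $P\in\mathbb{O}P^2$ and let $Z\in T^{\mathbb{C}}_P\mathbb{O}P^2$ be isotropic, i.e. $\operatorname{tr}(Z\circ Z)=0$. Then the complex-linear endomorphism $\hat Z$ of $\mathfrak{h}^0_3(\mathbb{O})^{\mathbb{C}}$ defined by $$\hat Z(X)=-4\,Z\circ X+4\,Z\circ(P\circ X)+4\,P\circ(Z\circ X)$$ is nilpotent with nilorder $r\le 5$ (i.e. $\hat Z^5=0$).
   Context: $\mathfrak{h}_3(\mathbb{O})$ is the real vector space of hermitian $3\times3$ octonionic matrices with Jordan product $a\circ b=\frac12(ab+ba)$, extended complex-bilinearly to the complexification; $\mathfrak{h}^0_3(\mathbb{O})$ is the subspace of traceless matrices. $\mathbb{O}P^2=\{P\in\mathfrak{h}_3(\mathbb{O}):P\circ P=P,\ \operatorname{tr}P=1\}$, $T_P\mathbb{O}P^2=\{Z\in\mathfrak{h}_3(\mathbb{O}):2P\circ Z=Z\}$ and $T^{\mathbb{C}}_P\mathbb{O}P^2$ is its complexification. (For real $Z$, $\hat Z$ is the derivative in direction $Z$ of the orthogonal projection onto the $10$-dimensional subspace $V_P\subset\mathfrak{h}^0_3(\mathbb{O})$ corresponding to $P$, mapping $V_P\to V_P^\perp$ and $V_P^\perp\to V_P$.) The nilorder is the least $r$ with $\hat Z^r=0$. *)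

theory Defs
  imports Complex_Main "HOL-Library.Product_Plus" "HOL-Library.Numeral_Type"
begin

text \<open>Starting from the scalar field complex with trivial conjugation (the complexification is
  complex-linear, so the octonionic conjugation is extended complex-linearly), three doublings
  give the complexified octonions O tensor C.\<close>

type_synonym c2 = "complex \<times> complex"
type_synonym c4 = "c2 \<times> c2"
type_synonym oc = "c4 \<times> c4"

fun conj1 :: "c2 \<Rightarrow> c2" where "conj1 (a, b) = (a, - b)"
fun mul1 :: "c2 \<Rightarrow> c2 \<Rightarrow> c2" where
  "mul1 (a, b) (c, d) = (a * c - d * b, d * a + b * c)"

fun conj2 :: "c4 \<Rightarrow> c4" where "conj2 (a, b) = (conj1 a, - b)"
fun mul2 :: "c4 \<Rightarrow> c4 \<Rightarrow> c4" where
  "mul2 (a, b) (c, d) = (mul1 a c - mul1 (conj1 d) b, mul1 d a + mul1 b (conj1 c))"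

fun oconj :: "oc \<Rightarrow> oc" where "oconj (a, b) = (conj2 a, - b)"
fun omul :: "oc \<Rightarrow> oc \<Rightarrow> oc" where
  "omul (a, b) (c, d) = (mul2 a c - mul2 (conj2 d) b, mul2 d a + mul2 b (conj2 c))"

definition ofc :: "complex \<Rightarrow> oc" where
  "ofc s = (((s, 0), (0, 0)), ((0, 0), (0, 0)))"

definition oscale :: "complex \<Rightarrow> oc \<Rightarrow> oc" where
  "oscale s x = omul (ofc s) x"

fun ore :: "oc \<Rightarrow> complex" where "ore (((a, _), _), _) = a"

fun oreal :: "oc \<Rightarrow> bool" where
  "oreal (((a1, a2), (a3, a4)), ((a5, a6), (a7, a8))) =
     (\<forall>z \<in> {a1, a2, a3, a4, a5, a6, a7, a8}. Im z = 0)"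

type_synonym omat = "3 \<Rightarrow> 3 \<Rightarrow> oc"

definition mmul :: "omat \<Rightarrow> omat \<Rightarrow> omat" where
  "mmul A B = (\<lambda>i j. \<Sum>k\<in>UNIV. omul (A i k) (B k j))"

definition jordan :: "omat \<Rightarrow> omat \<Rightarrow> omat" (infixl "\<circ>\<^sub>J" 70) where
  "jordan A B = (\<lambda>i j. oscale (1/2) (mmul A B i j + mmul B A i j))"

definition mscale :: "complex \<Rightarrow> omat \<Rightarrow> omat" where
  "mscale s A = (\<lambda>i j. oscale s (A i j))"

definition madd :: "omat \<Rightarrow> omat \<Rightarrow> omat" where
  "madd A B = (\<lambda>i j. A i j + B i j)"

definition mtr :: "omat \<Rightarrow> complex" where
  "mtr A = (\<Sum>i\<in>UNIV. ore (A i i))"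

text \<open>Complexification of h_3(O): matrices hermitian w.r.t. the complex-linear
  octonionic conjugation.\<close>
definition herm :: "omat \<Rightarrow> bool" where
  "herm A \<longleftrightarrow> (\<forall>i j. A j i = oconj (A i j))"

definition herm0 :: "omat set" where
  "herm0 = {A. herm A \<and> mtr A = 0}"

definition mreal :: "omat \<Rightarrow> bool" where
  "mreal A \<longleftrightarrow> (\<forall>i j. oreal (A i j))"

definition OP2 :: "omat set" where
  "OP2 = {P. herm P \<and> mreal P \<and> P \<circ>\<^sub>J P = P \<and> mtr P = 1}"

definition TC :: "omat \<Rightarrow> omat set" where
  "TC P = {Z. herm Z \<and> mscale 2 (P \<circ>\<^sub>J Z) = Z}"

definition Zhat :: "omat \<Rightarrow> omat \<Rightarrow> omat \<Rightarrow> omat" where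
  "Zhat P Z X = madd (madd (mscale (-4) (Z \<circ>\<^sub>J X)) (mscale 4 (Z \<circ>\<^sub>J (P \<circ>\<^sub>J X))))
                     (mscale 4 (P \<circ>\<^sub>J (Z \<circ>\<^sub>J X)))"

end

theory Submission
  imports Defs
begin

lemma oc_exh: obtains x1 x2 x3 x4 x5 x6 x7 x8 where "x = (((x1,x2),(x3,x4)),((x5,x6),(x7,x8)))"
  by (metis prod.exhaust)

lemmas osimps = omul.simps mul2.simps mul1.simps conj2.simps conj1.simps oconj.simps ore.simps
       minus_prod_def plus_prod_def uminus_prod_def zero_prod_def fst_conv snd_conv prod.inject
       ofc_def oscale_def

definition ip :: "oc \<Rightarrow> oc \<Rightarrow> complex" where "ip x y = ore (omul x (oconj y))"
definition onr :: "oc \<Rightarrow> complex" where "onr x = ip x x"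

lemma three_exh: "(i::3) = 0 \<or> i = 1 \<or> i = 2"
proof (induct i)
  case (of_int z)
  then have "z = 0 \<or> z = 1 \<or> z = 2" by fastforce
  then show ?case by auto
qed

lemma three_neq[simp]: "(0::3) \<noteq> 1" "(1::3) \<noteq> 0" "(0::3) \<noteq> 2" "(2::3) \<noteq> 0" "(1::3) \<noteq> 2" "(2::3) \<noteq> 1"
  by simp_all

lemma UNIV3: "(UNIV::3 set) = {0,1,2}" using three_exh by auto
lemma sum3: "sum f (UNIV::3 set) = f 0 + f 1 + f 2"
  unfolding UNIV3 by (simp add: ac_simps)

lemma omul_add_left: "omul (x + y) z = omul x z + omul y z"
  by (rule oc_exh[of x], rule oc_exh[of y], rule oc_exh[of z], hypsubst, simp only: osimps, ((intro conjI)?, (((thin_tac "_ = _")+)?, (algebra | simp add: algebra_simps))+)?)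

lemma omul_add_right: "omul x (y + z) = omul x y + omul x z"
  by (rule oc_exh[of x], rule oc_exh[of y], rule oc_exh[of z], hypsubst, simp only: osimps, ((intro conjI)?, (((thin_tac "_ = _")+)?, (algebra | simp add: algebra_simps))+)?)

lemma omul_minus_left: "omul (- x) y = - omul x y"
  by (rule oc_exh[of x], rule oc_exh[of y], hypsubst, simp only: osimps, ((intro conjI)?, (((thin_tac "_ = _")+)?, (algebra | simp add: algebra_simps))+)?)

lemma omul_minus_right: "omul x (- y) = - omul x y"
  by (rule oc_exh[of x], rule oc_exh[of y], hypsubst, simp only: osimps, ((intro conjI)?, (((thin_tac "_ = _")+)?, (algebra | simp add: algebra_simps))+)?)

lemma omul_diff_left: "omul (x - y) z = omul x z - omul y z"
  by (rule oc_exh[of x], rule oc_exh[of y], rule oc_exh[of z], hypsubst, simp only: osimps, ((intro conjI)?, (((thin_tac "_ = _")+)?, (algebra | simp add: algebra_simps))+)?)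

lemma omul_diff_right: "omul x (y - z) = omul x y - omul x z"
  by (rule oc_exh[of x], rule oc_exh[of y], rule oc_exh[of z], hypsubst, simp only: osimps, ((intro conjI)?, (((thin_tac "_ = _")+)?, (algebra | simp add: algebra_simps))+)?)

lemma omul_zero_left: "omul 0 x = 0"
  by (rule oc_exh[of x], hypsubst, simp only: osimps, ((intro conjI)?, (((thin_tac "_ = _")+)?, (algebra | simp add: algebra_simps))+)?)

lemma omul_zero_right: "omul x 0 = 0"
  by (rule oc_exh[of x], hypsubst, simp only: osimps, ((intro conjI)?, (((thin_tac "_ = _")+)?, (algebra | simp add: algebra_simps))+)?)

lemma omul_oscale_left: "omul (oscale s x) y = oscale s (omul x y)"
  by (rule oc_exh[of x], rule oc_exh[of y], hypsubst, simp only: osimps, ((intro conjI)?, (((thin_tac "_ = _")+)?, (algebra | simp add: algebra_simps))+)?)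

lemma omul_oscale_right: "omul x (oscale s y) = oscale s (omul x y)"
  by (rule oc_exh[of x], rule oc_exh[of y], hypsubst, simp only: osimps, ((intro conjI)?, (((thin_tac "_ = _")+)?, (algebra | simp add: algebra_simps))+)?)

lemma omul_ofc_left: "omul (ofc s) x = oscale s x"
  by (rule oc_exh[of x], hypsubst, simp only: osimps, ((intro conjI)?, (((thin_tac "_ = _")+)?, (algebra | simp add: algebra_simps))+)?)

lemma omul_ofc_right: "omul x (ofc s) = oscale s x"
  by (rule oc_exh[of x], hypsubst, simp only: osimps, ((intro conjI)?, (((thin_tac "_ = _")+)?, (algebra | simp add: algebra_simps))+)?)

lemma oscale_add: "oscale s (x + y) = oscale s x + oscale s y"
  by (rule oc_exh[of x], rule oc_exh[of y], hypsubst, simp only: osimps, ((intro conjI)?, (((thin_tac "_ = _")+)?, (algebra | simp add: algebra_simps))+)?)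

lemma oscale_add_left: "oscale (s + t) x = oscale s x + oscale t x"
  by (rule oc_exh[of x], hypsubst, simp only: osimps, ((intro conjI)?, (((thin_tac "_ = _")+)?, (algebra | simp add: algebra_simps))+)?)

lemma oscale_diff: "oscale s (x - y) = oscale s x - oscale s y"
  by (rule oc_exh[of x], rule oc_exh[of y], hypsubst, simp only: osimps, ((intro conjI)?, (((thin_tac "_ = _")+)?, (algebra | simp add: algebra_simps))+)?)

lemma oscale_diff_left: "oscale (s - t) x = oscale s x - oscale t x"
  by (rule oc_exh[of x], hypsubst, simp only: osimps, ((intro conjI)?, (((thin_tac "_ = _")+)?, (algebra | simp add: algebra_simps))+)?)

lemma oscale_minus: "oscale s (- x) = - oscale s x"
  by (rule oc_exh[of x], hypsubst, simp only: osimps, ((intro conjI)?, (((thin_tac "_ = _")+)?, (algebra | simp add: algebra_simps))+)?)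

lemma oscale_minus_left: "oscale (- s) x = - oscale s x"
  by (rule oc_exh[of x], hypsubst, simp only: osimps, ((intro conjI)?, (((thin_tac "_ = _")+)?, (algebra | simp add: algebra_simps))+)?)

lemma oscale_oscale: "oscale s (oscale t x) = oscale (s * t) x"
  by (rule oc_exh[of x], hypsubst, simp only: osimps, ((intro conjI)?, (((thin_tac "_ = _")+)?, (algebra | simp add: algebra_simps))+)?)

lemma oscale_one: "oscale 1 x = x"
  by (rule oc_exh[of x], hypsubst, simp only: osimps, ((intro conjI)?, (((thin_tac "_ = _")+)?, (algebra | simp add: algebra_simps))+)?)

lemma oscale_zero_left: "oscale 0 x = 0"
  by (rule oc_exh[of x], hypsubst, simp only: osimps, ((intro conjI)?, (((thin_tac "_ = _")+)?, (algebra | simp add: algebra_simps))+)?)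

lemma oscale_zero: "oscale s 0 = 0"
  by (simp only: osimps, ((intro conjI)?, (((thin_tac "_ = _")+)?, (algebra | simp add: algebra_simps))+)?)

lemma oconj_add: "oconj (x + y) = oconj x + oconj y"
  by (rule oc_exh[of x], rule oc_exh[of y], hypsubst, simp only: osimps, ((intro conjI)?, (((thin_tac "_ = _")+)?, (algebra | simp add: algebra_simps))+)?)

lemma oconj_minus: "oconj (- x) = - oconj x"
  by (rule oc_exh[of x], hypsubst, simp only: osimps, ((intro conjI)?, (((thin_tac "_ = _")+)?, (algebra | simp add: algebra_simps))+)?)

lemma oconj_diff: "oconj (x - y) = oconj x - oconj y"
  by (rule oc_exh[of x], rule oc_exh[of y], hypsubst, simp only: osimps, ((intro conjI)?, (((thin_tac "_ = _")+)?, (algebra | simp add: algebra_simps))+)?)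

lemma oconj_zero: "oconj 0 = 0"
  by (simp only: osimps, ((intro conjI)?, (((thin_tac "_ = _")+)?, (algebra | simp add: algebra_simps))+)?)

lemma oconj_oscale: "oconj (oscale s x) = oscale s (oconj x)"
  by (rule oc_exh[of x], hypsubst, simp only: osimps, ((intro conjI)?, (((thin_tac "_ = _")+)?, (algebra | simp add: algebra_simps))+)?)

lemma oconj_oconj: "oconj (oconj x) = x"
  by (rule oc_exh[of x], hypsubst, simp only: osimps, ((intro conjI)?, (((thin_tac "_ = _")+)?, (algebra | simp add: algebra_simps))+)?)

lemma oconj_mul: "oconj (omul x y) = omul (oconj y) (oconj x)"
  by (rule oc_exh[of x], rule oc_exh[of y], hypsubst, simp only: osimps, ((intro conjI)?, (((thin_tac "_ = _")+)?, (algebra | simp add: algebra_simps))+)?)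

lemma oconj_ofc: "oconj (ofc s) = ofc s"
  by (simp only: osimps, ((intro conjI)?, (((thin_tac "_ = _")+)?, (algebra | simp add: algebra_simps))+)?)

lemma ore_add: "ore (x + y) = ore x + ore y"
  by (rule oc_exh[of x], rule oc_exh[of y], hypsubst, simp only: osimps, ((intro conjI)?, (((thin_tac "_ = _")+)?, (algebra | simp add: algebra_simps))+)?)

lemma ore_minus: "ore (- x) = - ore x"
  by (rule oc_exh[of x], hypsubst, simp only: osimps, ((intro conjI)?, (((thin_tac "_ = _")+)?, (algebra | simp add: algebra_simps))+)?)

lemma ore_diff: "ore (x - y) = ore x - ore y"
  by (rule oc_exh[of x], rule oc_exh[of y], hypsubst, simp only: osimps, ((intro conjI)?, (((thin_tac "_ = _")+)?, (algebra | simp add: algebra_simps))+)?)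

lemma ore_oscale: "ore (oscale s x) = s * ore x"
  by (rule oc_exh[of x], hypsubst, simp only: osimps, ((intro conjI)?, (((thin_tac "_ = _")+)?, (algebra | simp add: algebra_simps))+)?)

lemma ore_ofc: "ore (ofc s) = s"
  by (simp only: osimps, ((intro conjI)?, (((thin_tac "_ = _")+)?, (algebra | simp add: algebra_simps))+)?)

lemma ore_zero: "ore 0 = 0"
  by (simp only: osimps, ((intro conjI)?, (((thin_tac "_ = _")+)?, (algebra | simp add: algebra_simps))+)?)

lemma ore_oconj: "ore (oconj x) = ore x"
  by (rule oc_exh[of x], hypsubst, simp only: osimps, ((intro conjI)?, (((thin_tac "_ = _")+)?, (algebra | simp add: algebra_simps))+)?)

lemma ofc_add: "ofc (s + t) = ofc s + ofc t"
  by (simp only: osimps, ((intro conjI)?, (((thin_tac "_ = _")+)?, (algebra | simp add: algebra_simps))+)?)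

lemma ofc_diff: "ofc (s - t) = ofc s - ofc t"
  by (simp only: osimps, ((intro conjI)?, (((thin_tac "_ = _")+)?, (algebra | simp add: algebra_simps))+)?)

lemma ofc_minus: "ofc (- s) = - ofc s"
  by (simp only: osimps, ((intro conjI)?, (((thin_tac "_ = _")+)?, (algebra | simp add: algebra_simps))+)?)

lemma ofc_zero: "ofc 0 = 0"
  by (simp only: osimps, ((intro conjI)?, (((thin_tac "_ = _")+)?, (algebra | simp add: algebra_simps))+)?)

lemma oscale_ofc: "oscale s (ofc t) = ofc (s * t)"
  by (simp only: osimps, ((intro conjI)?, (((thin_tac "_ = _")+)?, (algebra | simp add: algebra_simps))+)?)

lemma mul_conj_self: "omul x (oconj x) = ofc (onr x)"
  by (rule oc_exh[of x], hypsubst, simp only: ip_def onr_def osimps, ((intro conjI)?, (((thin_tac "_ = _")+)?, (algebra | simp add: algebra_simps))+)?)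

lemma conj_mul_self: "omul (oconj x) x = ofc (onr x)"
  by (rule oc_exh[of x], hypsubst, simp only: ip_def onr_def osimps, ((intro conjI)?, (((thin_tac "_ = _")+)?, (algebra | simp add: algebra_simps))+)?)

lemma ip_sym: "ip x y = ip y x"
  by (rule oc_exh[of x], rule oc_exh[of y], hypsubst, simp only: ip_def onr_def osimps, ((intro conjI)?, (((thin_tac "_ = _")+)?, (algebra | simp add: algebra_simps))+)?)

lemma ip_conj_left: "ore (omul (oconj x) y) = ip x y"
  by (rule oc_exh[of x], rule oc_exh[of y], hypsubst, simp only: ip_def onr_def osimps, ((intro conjI)?, (((thin_tac "_ = _")+)?, (algebra | simp add: algebra_simps))+)?)

lemma ip_add_left: "ip (x + y) z = ip x z + ip y z"
  by (rule oc_exh[of x], rule oc_exh[of y], rule oc_exh[of z], hypsubst, simp only: ip_def onr_def osimps, ((intro conjI)?, (((thin_tac "_ = _")+)?, (algebra | simp add: algebra_simps))+)?)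

lemma ip_add_right: "ip x (y + z) = ip x y + ip x z"
  by (rule oc_exh[of x], rule oc_exh[of y], rule oc_exh[of z], hypsubst, simp only: ip_def onr_def osimps, ((intro conjI)?, (((thin_tac "_ = _")+)?, (algebra | simp add: algebra_simps))+)?)

lemma ip_diff_left: "ip (x - y) z = ip x z - ip y z"
  by (rule oc_exh[of x], rule oc_exh[of y], rule oc_exh[of z], hypsubst, simp only: ip_def onr_def osimps, ((intro conjI)?, (((thin_tac "_ = _")+)?, (algebra | simp add: algebra_simps))+)?)

lemma ip_diff_right: "ip x (y - z) = ip x y - ip x z"
  by (rule oc_exh[of x], rule oc_exh[of y], rule oc_exh[of z], hypsubst, simp only: ip_def onr_def osimps, ((intro conjI)?, (((thin_tac "_ = _")+)?, (algebra | simp add: algebra_simps))+)?)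

lemma ip_minus_left: "ip (- x) z = - ip x z"
  by (rule oc_exh[of x], rule oc_exh[of z], hypsubst, simp only: ip_def onr_def osimps, ((intro conjI)?, (((thin_tac "_ = _")+)?, (algebra | simp add: algebra_simps))+)?)

lemma ip_minus_right: "ip x (- z) = - ip x z"
  by (rule oc_exh[of x], rule oc_exh[of z], hypsubst, simp only: ip_def onr_def osimps, ((intro conjI)?, (((thin_tac "_ = _")+)?, (algebra | simp add: algebra_simps))+)?)

lemma ip_oscale_left: "ip (oscale s x) y = s * ip x y"
  by (rule oc_exh[of x], rule oc_exh[of y], hypsubst, simp only: ip_def onr_def osimps, ((intro conjI)?, (((thin_tac "_ = _")+)?, (algebra | simp add: algebra_simps))+)?)

lemma ip_oscale_right: "ip x (oscale s y) = s * ip x y"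
  by (rule oc_exh[of x], rule oc_exh[of y], hypsubst, simp only: ip_def onr_def osimps, ((intro conjI)?, (((thin_tac "_ = _")+)?, (algebra | simp add: algebra_simps))+)?)

lemma ip_zero_left: "ip 0 x = 0"
  by (rule oc_exh[of x], hypsubst, simp only: ip_def onr_def osimps, ((intro conjI)?, (((thin_tac "_ = _")+)?, (algebra | simp add: algebra_simps))+)?)

lemma ip_zero_right: "ip x 0 = 0"
  by (rule oc_exh[of x], hypsubst, simp only: ip_def onr_def osimps, ((intro conjI)?, (((thin_tac "_ = _")+)?, (algebra | simp add: algebra_simps))+)?)

lemma ip_oconj: "ip (oconj x) (oconj y) = ip x y"
  by (rule oc_exh[of x], rule oc_exh[of y], hypsubst, simp only: ip_def onr_def osimps, ((intro conjI)?, (((thin_tac "_ = _")+)?, (algebra | simp add: algebra_simps))+)?)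

lemma add_conj_self: "x + oconj x = ofc (2 * ore x)"
  by (rule oc_exh[of x], hypsubst, simp only: osimps, ((intro conjI)?, (((thin_tac "_ = _")+)?, (algebra | simp add: algebra_simps))+)?)

lemma alt1: "omul x (omul (oconj x) y) = oscale (onr x) y"
  by (rule oc_exh[of x], rule oc_exh[of y], hypsubst, simp only: ip_def onr_def osimps, ((intro conjI)?, (((thin_tac "_ = _")+)?, (algebra | simp add: algebra_simps))+)?)

lemma alt2: "omul (oconj x) (omul x y) = oscale (onr x) y"
  by (rule oc_exh[of x], rule oc_exh[of y], hypsubst, simp only: ip_def onr_def osimps, ((intro conjI)?, (((thin_tac "_ = _")+)?, (algebra | simp add: algebra_simps))+)?)

lemma alt3: "omul (omul y x) (oconj x) = oscale (onr x) y"
  by (rule oc_exh[of x], rule oc_exh[of y], hypsubst, simp only: ip_def onr_def osimps, ((intro conjI)?, (((thin_tac "_ = _")+)?, (algebra | simp add: algebra_simps))+)?)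

lemma alt4: "omul (omul y (oconj x)) x = oscale (onr x) y"
  by (rule oc_exh[of x], rule oc_exh[of y], hypsubst, simp only: ip_def onr_def osimps, ((intro conjI)?, (((thin_tac "_ = _")+)?, (algebra | simp add: algebra_simps))+)?)

lemma idO2: "omul (omul x y) (oconj z) + omul (omul x z) (oconj y) = oscale (2 * ip y z) x"
  by (rule oc_exh[of x], rule oc_exh[of y], rule oc_exh[of z], hypsubst, simp only: ip_def onr_def osimps, ((intro conjI)?, (((thin_tac "_ = _")+)?, (algebra | simp add: algebra_simps))+)?)

lemma idO3: "omul (oconj x) (omul y z) + omul (oconj y) (omul x z) = oscale (2 * ip x y) z"
  by (rule oc_exh[of x], rule oc_exh[of y], rule oc_exh[of z], hypsubst, simp only: ip_def onr_def osimps, ((intro conjI)?, (((thin_tac "_ = _")+)?, (algebra | simp add: algebra_simps))+)?)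

lemma idO4a: "ip x (omul (oconj y) v) = ip (omul y x) v"
  by (rule oc_exh[of x], rule oc_exh[of y], rule oc_exh[of v], hypsubst, simp only: ip_def onr_def osimps, ((intro conjI)?, (((thin_tac "_ = _")+)?, (algebra | simp add: algebra_simps))+)?)

lemma idO4b: "ip x (omul v (oconj y)) = ip (omul x y) v"
  by (rule oc_exh[of x], rule oc_exh[of y], rule oc_exh[of v], hypsubst, simp only: ip_def onr_def osimps, ((intro conjI)?, (((thin_tac "_ = _")+)?, (algebra | simp add: algebra_simps))+)?)

lemma idO5a: "ip (omul x z) (omul y z) = onr z * ip x y"
  by (rule oc_exh[of x], rule oc_exh[of y], rule oc_exh[of z], hypsubst, simp only: ip_def onr_def osimps, ((intro conjI)?, (((thin_tac "_ = _")+)?, (algebra | simp add: algebra_simps))+)?)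

lemma idO5b: "ip (omul z x) (omul z y) = onr z * ip x y"
  by (rule oc_exh[of x], rule oc_exh[of y], rule oc_exh[of z], hypsubst, simp only: ip_def onr_def osimps, ((intro conjI)?, (((thin_tac "_ = _")+)?, (algebra | simp add: algebra_simps))+)?)

lemma idO6: "onr (omul x y) = onr x * onr y"
  by (rule oc_exh[of x], rule oc_exh[of y], hypsubst, simp only: ip_def onr_def osimps, ((intro conjI)?, (((thin_tac "_ = _")+)?, (algebra | simp add: algebra_simps))+)?)

lemma onr_oconj: "onr (oconj x) = onr x"
  by (rule oc_exh[of x], hypsubst, simp only: ip_def onr_def osimps, ((intro conjI)?, (((thin_tac "_ = _")+)?, (algebra | simp add: algebra_simps))+)?)

lemma flex: "omul (omul u w) u = omul u (omul w u)"
  by (rule oc_exh[of u], rule oc_exh[of w], hypsubst, simp only: osimps, ((intro conjI)?, (((thin_tac "_ = _")+)?, (algebra | simp add: algebra_simps))+)?)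

lemma TR_a: "oconj (omul (omul u x) (omul y u)) = omul (omul (oconj u) (oconj (omul x y))) (oconj u)"
  by (rule oc_exh[of u], rule oc_exh[of x], rule oc_exh[of y], hypsubst, simp only: osimps, ((intro conjI)?, (((thin_tac "_ = _")+)?, (algebra | simp add: algebra_simps))+)?)

lemma TR_b: "oconj (omul (omul x u) (omul (omul (oconj u) y) (oconj u))) = oscale (onr u) (omul u (oconj (omul x y)))"
  by (rule oc_exh[of u], rule oc_exh[of x], rule oc_exh[of y], hypsubst, simp only: ip_def onr_def osimps, ((intro conjI)?, (((thin_tac "_ = _")+)?, (algebra | simp add: algebra_simps))+)?)

lemma TR_c: "oconj (omul (omul (omul (oconj u) x) (oconj u)) (omul u y)) = oscale (onr u) (omul (oconj (omul x y)) u)"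
  by (rule oc_exh[of u], rule oc_exh[of x], rule oc_exh[of y], hypsubst, simp only: ip_def onr_def osimps, ((intro conjI)?, (((thin_tac "_ = _")+)?, (algebra | simp add: algebra_simps))+)?)


definition hm :: "complex \<Rightarrow> complex \<Rightarrow> complex \<Rightarrow> oc \<Rightarrow> oc \<Rightarrow> oc \<Rightarrow> omat" where
"hm a1 a2 a3 x1 x2 x3 = (\<lambda>i j. if i = 0 then (if j = 0 then ofc a1 else if j = 1 then x3 else oconj x2)
   else if i = 1 then (if j = 0 then oconj x3 else if j = 1 then ofc a2 else x1)
   else (if j = 0 then x2 else if j = 1 then oconj x1 else ofc a3))"

lemma hm_simps[simp]: "hm a1 a2 a3 x1 x2 x3 0 0 = ofc a1" "hm a1 a2 a3 x1 x2 x3 0 1 = x3"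
  "hm a1 a2 a3 x1 x2 x3 0 2 = oconj x2" "hm a1 a2 a3 x1 x2 x3 1 0 = oconj x3"
  "hm a1 a2 a3 x1 x2 x3 1 1 = ofc a2" "hm a1 a2 a3 x1 x2 x3 1 2 = x1"
  "hm a1 a2 a3 x1 x2 x3 2 0 = x2" "hm a1 a2 a3 x1 x2 x3 2 1 = oconj x1"
  "hm a1 a2 a3 x1 x2 x3 2 2 = ofc a3"
  by (simp_all add: hm_def)

lemma omat_eqI: fixes A B :: omat assumes "\<And>i j. i \<in> {0,1,2} \<Longrightarrow> j \<in> {0,1,2} \<Longrightarrow> A i j = B i j" shows "A = B"
proof (rule ext, rule ext)
  fix i j :: 3
  have "i \<in> {0,1,2}" "j \<in> {0,1,2}" using three_exh[of i] three_exh[of j] by auto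
  thus "A i j = B i j" using assms by blast
qed

lemma omat_eq9: fixes A B :: omat shows "A 0 0 = B 0 0 \<Longrightarrow> A 0 1 = B 0 1 \<Longrightarrow> A 0 2 = B 0 2 \<Longrightarrow>
   A 1 0 = B 1 0 \<Longrightarrow> A 1 1 = B 1 1 \<Longrightarrow> A 1 2 = B 1 2 \<Longrightarrow>
   A 2 0 = B 2 0 \<Longrightarrow> A 2 1 = B 2 1 \<Longrightarrow> A 2 2 = B 2 2 \<Longrightarrow> A = B"
  by (rule omat_eqI) (auto simp del: three_neq)

lemma mmul3: "mmul A B i j = omul (A i 0) (B 0 j) + omul (A i 1) (B 1 j) + omul (A i 2) (B 2 j)"
  by (simp add: mmul_def sum3)

lemma e00: "oscale (1/2) (omul (ofc a) (ofc b) + omul x (oconj y) + omul (oconj z) w + (omul (ofc b) (ofc a) + omul y (oconj x) + omul (oconj w) z)) = ofc (a*b + ip x y + ip z w)"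
  by (rule oc_exh[of x], rule oc_exh[of y], rule oc_exh[of z], rule oc_exh[of w], hypsubst,
     simp only: ip_def osimps, ((intro conjI)?, (((thin_tac "_ = _")+)?, (algebra | simp add: algebra_simps))+)?)+
lemma e11: "oscale (1/2) (omul (oconj x) y + omul (ofc a) (ofc b) + omul z (oconj w) + (omul (oconj y) x + omul (ofc b) (ofc a) + omul w (oconj z))) = ofc (a*b + ip x y + ip z w)"
  by (rule oc_exh[of x], rule oc_exh[of y], rule oc_exh[of z], rule oc_exh[of w], hypsubst,
     simp only: ip_def osimps, ((intro conjI)?, (((thin_tac "_ = _")+)?, (algebra | simp add: algebra_simps))+)?)+
lemma e22: "oscale (1/2) (omul x (oconj y) + omul (oconj z) w + omul (ofc a) (ofc b) + (omul y (oconj x) + omul (oconj w) z + omul (ofc b) (ofc a))) = ofc (a*b + ip x y + ip z w)"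
  by (rule oc_exh[of x], rule oc_exh[of y], rule oc_exh[of z], rule oc_exh[of w], hypsubst,
     simp only: ip_def osimps, ((intro conjI)?, (((thin_tac "_ = _")+)?, (algebra | simp add: algebra_simps))+)?)+

definition jg1 :: "complex \<Rightarrow> complex \<Rightarrow> complex \<Rightarrow> oc \<Rightarrow> oc \<Rightarrow> oc \<Rightarrow> complex \<Rightarrow> complex \<Rightarrow> complex \<Rightarrow> oc \<Rightarrow> oc \<Rightarrow> oc \<Rightarrow> complex" where "jg1 a1 a2 a3 x1 x2 x3 b1 b2 b3 y1 y2 y3 = a1 * b1 + ip x3 y3 + ip x2 y2"
definition jg2 :: "complex \<Rightarrow> complex \<Rightarrow> complex \<Rightarrow> oc \<Rightarrow> oc \<Rightarrow> oc \<Rightarrow> complex \<Rightarrow> complex \<Rightarrow> complex \<Rightarrow> oc \<Rightarrow> oc \<Rightarrow> oc \<Rightarrow> complex" where "jg2 a1 a2 a3 x1 x2 x3 b1 b2 b3 y1 y2 y3 = a2 * b2 + ip x3 y3 + ip x1 y1"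
definition jg3 :: "complex \<Rightarrow> complex \<Rightarrow> complex \<Rightarrow> oc \<Rightarrow> oc \<Rightarrow> oc \<Rightarrow> complex \<Rightarrow> complex \<Rightarrow> complex \<Rightarrow> oc \<Rightarrow> oc \<Rightarrow> oc \<Rightarrow> complex" where "jg3 a1 a2 a3 x1 x2 x3 b1 b2 b3 y1 y2 y3 = a3 * b3 + ip x2 y2 + ip x1 y1"
definition jc1 :: "complex \<Rightarrow> complex \<Rightarrow> complex \<Rightarrow> oc \<Rightarrow> oc \<Rightarrow> oc \<Rightarrow> complex \<Rightarrow> complex \<Rightarrow> complex \<Rightarrow> oc \<Rightarrow> oc \<Rightarrow> oc \<Rightarrow> oc" where "jc1 a1 a2 a3 x1 x2 x3 b1 b2 b3 y1 y2 y3 = oscale (1/2) (oscale (a2 + a3) y1 + oscale (b2 + b3) x1 + oconj (omul y2 x3) + oconj (omul x2 y3))"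
definition jc2 :: "complex \<Rightarrow> complex \<Rightarrow> complex \<Rightarrow> oc \<Rightarrow> oc \<Rightarrow> oc \<Rightarrow> complex \<Rightarrow> complex \<Rightarrow> complex \<Rightarrow> oc \<Rightarrow> oc \<Rightarrow> oc \<Rightarrow> oc" where "jc2 a1 a2 a3 x1 x2 x3 b1 b2 b3 y1 y2 y3 = oscale (1/2) (oscale (a1 + a3) y2 + oscale (b1 + b3) x2 + oconj (omul y3 x1) + oconj (omul x3 y1))"
definition jc3 :: "complex \<Rightarrow> complex \<Rightarrow> complex \<Rightarrow> oc \<Rightarrow> oc \<Rightarrow> oc \<Rightarrow> complex \<Rightarrow> complex \<Rightarrow> complex \<Rightarrow> oc \<Rightarrow> oc \<Rightarrow> oc \<Rightarrow> oc" where "jc3 a1 a2 a3 x1 x2 x3 b1 b2 b3 y1 y2 y3 = oscale (1/2) (oscale (a1 + a2) y3 + oscale (b1 + b2) x3 + oconj (omul y1 x2) + oconj (omul x1 y2))"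

lemmas lin_simps = omul_ofc_left omul_ofc_right oconj_mul oconj_add oconj_oscale oconj_oconj oconj_ofc
   oscale_add_left oscale_add omul_add_left omul_add_right omul_oscale_left omul_oscale_right oscale_oscale

lemma jordan_hm: "jordan (hm a1 a2 a3 x1 x2 x3) (hm b1 b2 b3 y1 y2 y3) =
  hm (jg1 a1 a2 a3 x1 x2 x3 b1 b2 b3 y1 y2 y3) (jg2 a1 a2 a3 x1 x2 x3 b1 b2 b3 y1 y2 y3) (jg3 a1 a2 a3 x1 x2 x3 b1 b2 b3 y1 y2 y3)
     (jc1 a1 a2 a3 x1 x2 x3 b1 b2 b3 y1 y2 y3) (jc2 a1 a2 a3 x1 x2 x3 b1 b2 b3 y1 y2 y3) (jc3 a1 a2 a3 x1 x2 x3 b1 b2 b3 y1 y2 y3)"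
  unfolding jg1_def jg2_def jg3_def jc1_def jc2_def jc3_def
  apply (rule omat_eq9)
  apply (simp_all only: jordan_def mmul3 hm_simps e00 e11 e22)
  by (simp_all add: lin_simps algebra_simps)


lemma oconj_fix: "oconj x = x \<Longrightarrow> x = ofc (ore x)"
  apply (rule oc_exh[of x], hypsubst)
  by (simp add: ofc_def)

lemma ofc_inj: "ofc a = ofc b \<longleftrightarrow> a = b"
  by (metis ore_ofc)

lemma herm_hm[simp]: "herm (hm a1 a2 a3 x1 x2 x3)"
  unfolding herm_def
proof (intro allI)
  fix i j :: 3
  show "hm a1 a2 a3 x1 x2 x3 j i = oconj (hm a1 a2 a3 x1 x2 x3 i j)"
    using three_exh[of i] three_exh[of j] by (auto simp: oconj_oconj oconj_ofc)
qed

lemma hm_of_herm: assumes "herm A"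
  shows "A = hm (ore (A 0 0)) (ore (A 1 1)) (ore (A 2 2)) (A 1 2) (A 2 0) (A 0 1)"
proof -
  have h: "\<And>i j. A j i = oconj (A i j)" using assms unfolding herm_def by blast
  have d: "\<And>i. A i i = ofc (ore (A i i))"
  proof -
    fix i
    have "oconj (A i i) = A i i" using h[of i i] by (rule sym)
    thus "A i i = ofc (ore (A i i))" by (rule oconj_fix)
  qed
  show ?thesis
    apply (rule omat_eq9)
    apply (simp_all only: hm_simps)
    by (rule d | rule h | rule refl)+
qed

lemma hm_eq_iff: "hm a1 a2 a3 x1 x2 x3 = hm b1 b2 b3 y1 y2 y3 \<longleftrightarrow> a1 = b1 \<and> a2 = b2 \<and> a3 = b3 \<and> x1 = y1 \<and> x2 = y2 \<and> x3 = y3"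
proof
  assume e: "hm a1 a2 a3 x1 x2 x3 = hm b1 b2 b3 y1 y2 y3"
  have "\<And>i j. hm a1 a2 a3 x1 x2 x3 i j = hm b1 b2 b3 y1 y2 y3 i j" using e by simp
  from this[of 0 0] this[of 1 1] this[of 2 2] this[of 1 2] this[of 2 0] this[of 0 1]
  show "a1 = b1 \<and> a2 = b2 \<and> a3 = b3 \<and> x1 = y1 \<and> x2 = y2 \<and> x3 = y3"
    by (simp add: ofc_inj)
qed simp

lemma madd_hm: "madd (hm a1 a2 a3 x1 x2 x3) (hm b1 b2 b3 y1 y2 y3) = hm (a1+b1) (a2+b2) (a3+b3) (x1+y1) (x2+y2) (x3+y3)"
  by (rule omat_eq9) (simp_all add: madd_def ofc_add oconj_add)

lemma mscale_hm: "mscale s (hm a1 a2 a3 x1 x2 x3) = hm (s*a1) (s*a2) (s*a3) (oscale s x1) (oscale s x2) (oscale s x3)"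
  by (rule omat_eq9) (simp_all add: mscale_def oscale_ofc oconj_oscale)

lemma mtr_hm: "mtr (hm a1 a2 a3 x1 x2 x3) = a1 + a2 + a3"
  by (simp add: mtr_def sum3 ore_ofc)

lemma zero_hm: "(\<lambda>i j. 0) = hm 0 0 0 0 0 0"
  by (rule omat_eq9) (simp_all add: ofc_zero oconj_zero)

lemma herm_ex: assumes "herm A" obtains a1 a2 a3 x1 x2 x3 where "A = hm a1 a2 a3 x1 x2 x3"
  using hm_of_herm[OF assms] by blast

lemma herm_jordan: assumes "herm A" "herm B" shows "herm (jordan A B)"
proof -
  obtain a1 a2 a3 x1 x2 x3 where a: "A = hm a1 a2 a3 x1 x2 x3" using herm_ex[OF assms(1)] .
  obtain b1 b2 b3 y1 y2 y3 where b: "B = hm b1 b2 b3 y1 y2 y3" using herm_ex[OF assms(2)] .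
  show ?thesis unfolding a b jordan_hm by (rule herm_hm)
qed
lemma herm_madd: assumes "herm A" "herm B" shows "herm (madd A B)"
proof -
  obtain a1 a2 a3 x1 x2 x3 where a: "A = hm a1 a2 a3 x1 x2 x3" using herm_ex[OF assms(1)] .
  obtain b1 b2 b3 y1 y2 y3 where b: "B = hm b1 b2 b3 y1 y2 y3" using herm_ex[OF assms(2)] .
  show ?thesis unfolding a b madd_hm by (rule herm_hm)
qed
lemma herm_mscale: assumes "herm A" shows "herm (mscale s A)"
proof -
  obtain a1 a2 a3 x1 x2 x3 where a: "A = hm a1 a2 a3 x1 x2 x3" using herm_ex[OF assms(1)] .
  show ?thesis unfolding a mscale_hm by (rule herm_hm)
qed
lemma herm_Zhat: "herm P \<Longrightarrow> herm Z \<Longrightarrow> herm X \<Longrightarrow> herm (Zhat P Z X)"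
  unfolding Zhat_def by (intro herm_madd herm_mscale herm_jordan)


lemma oscale_coords: 
  "fst (fst (fst (oscale s x))) = s * fst (fst (fst x))"
  "snd (fst (fst (oscale s x))) = s * snd (fst (fst x))"
  "fst (snd (fst (oscale s x))) = s * fst (snd (fst x))"
  "snd (snd (fst (oscale s x))) = s * snd (snd (fst x))"
  "fst (fst (snd (oscale s x))) = s * fst (fst (snd x))"
  "snd (fst (snd (oscale s x))) = s * snd (fst (snd x))"
  "fst (snd (snd (oscale s x))) = s * fst (snd (snd x))"
  "snd (snd (snd (oscale s x))) = s * snd (snd (snd x))"
  by (rule oc_exh[of x], simp add: oscale_def ofc_def)+

lemmas coord_simps = prod_eq_iff fst_add snd_add fst_diff snd_diff fst_uminus snd_uminus fst_zero snd_zero oscale_coords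

lemmas zero_simps = omul_zero_left omul_zero_right ip_zero_left ip_zero_right oconj_zero oscale_zero oscale_zero_left ofc_zero
lemmas ip_simps = ip_add_left ip_add_right ip_diff_left ip_diff_right ip_minus_left ip_minus_right ip_oscale_left ip_oscale_right
lemmas lin2_simps = lin_simps omul_minus_left omul_minus_right omul_diff_left omul_diff_right oconj_minus oconj_diff oscale_minus oscale_diff oscale_minus_left oscale_diff_left

lemma zhat_formula: "Zhat (hm 1 0 0 0 0 0) (hm 0 0 0 0 z2 z3) (hm a1 a2 a3 x1 x2 x3) =
  hm (2 * (ip z3 x3 + ip z2 x2)) (-2 * ip z3 x3) (-2 * ip z2 x2) (-(oconj (omul x2 z3) + oconj (omul z2 x3)))
     (oscale (a1 - a3) z2 - oconj (omul z3 x1)) (oscale (a1 - a2) z3 - oconj (omul x1 z2))"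
  unfolding Zhat_def jordan_hm mscale_hm madd_hm hm_eq_iff jg1_def jg2_def jg3_def jc1_def jc2_def jc3_def
  apply (simp only: zero_simps lin2_simps ip_simps)
  apply (simp only: coord_simps)
  apply (intro conjI)
  by algebra+


lemma ip_self: "ip x x = onr x" by (simp add: onr_def)

definition zA :: "oc \<Rightarrow> oc \<Rightarrow> oc \<Rightarrow> oc \<Rightarrow> complex" where "zA z2 z3 p2 p3 = ip z3 p3 + ip z2 p2"

lemma zh2: "Zhat (hm 1 0 0 0 0 0) (hm 0 0 0 0 z2 z3) (Zhat (hm 1 0 0 0 0 0) (hm 0 0 0 0 z2 z3) (hm 0 0 0 0 p2 p3)) =
  hm 0 0 0 0 (oscale (4 * zA z2 z3 p2 p3) z2 + oscale (onr z3) p2 - omul (omul z2 z3) (oconj p3))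
             (oscale (4 * zA z2 z3 p2 p3) z3 + oscale (onr z2) p3 - omul (oconj p2) (omul z2 z3))"
proof -
  have h1: "omul (omul z2 p3) (oconj z3) = oscale (2 * ip p3 z3) z2 - omul (omul z2 z3) (oconj p3)"
    using idO2[of z2 p3 z3] by (simp add: algebra_simps)
  have h2: "omul (oconj z2) (omul p2 z3) = oscale (2 * ip z2 p2) z3 - omul (oconj p2) (omul z2 z3)"
    using idO3[of z2 p2 z3] by (simp add: algebra_simps)
  have s1: "ip p3 z3 = ip z3 p3" "ip p2 z2 = ip z2 p2" by (rule ip_sym)+
  show ?thesis
    unfolding zhat_formula hm_eq_iff zA_def
    apply (simp only: zero_simps lin2_simps ip_simps h1 h2 alt2 alt3 s1)
    apply (simp only: coord_simps)
    apply (intro conjI)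
    by algebra+
qed

lemma zh4: assumes N: "onr z2 + onr z3 = 0"
  shows "Zhat (hm 1 0 0 0 0 0) (hm 0 0 0 0 z2 z3) (Zhat (hm 1 0 0 0 0 0) (hm 0 0 0 0 z2 z3)
   (Zhat (hm 1 0 0 0 0 0) (hm 0 0 0 0 z2 z3) (Zhat (hm 1 0 0 0 0 0) (hm 0 0 0 0 z2 z3) (hm 0 0 0 0 p2 p3)))) = hm 0 0 0 0 0 0"
proof -
  have n2: "onr z2 = - onr z3" using N by (simp add: eq_neg_iff_add_eq_0)
  have f1: "omul (omul z2 z3) (omul (omul (oconj z3) (oconj z2)) p2) = oscale (onr z2 * onr z3) p2"
    using alt1[of "omul z2 z3" p2] by (simp add: oconj_mul idO6)
  have f2: "omul (omul p3 (omul (oconj z3) (oconj z2))) (omul z2 z3) = oscale (onr z2 * onr z3) p3"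
    using alt4[of p3 "omul z2 z3"] by (simp add: oconj_mul idO6)
  have g1: "ip z3 (omul (oconj p2) (omul z2 z3)) = onr z3 * ip z2 p2"
    by (simp add: idO4a idO5a ip_sym)
  have g2: "ip z2 (omul (omul z2 z3) (oconj p3)) = onr z2 * ip z3 p3"
    by (simp add: idO4b idO5b ip_sym)
  show ?thesis
    unfolding zh2 hm_eq_iff zA_def
    apply (simp only: zero_simps lin2_simps ip_simps alt2 alt3 f1 f2 g1 g2 ip_self n2 simp_thms)
    apply (simp only: coord_simps)
    apply (intro conjI)
    by algebra+
qed


lemma oreal_mul: "oreal x \<Longrightarrow> oreal y \<Longrightarrow> oreal (omul x y)"
  by (rule oc_exh[of x], rule oc_exh[of y], simp)
lemma oreal_conj: "oreal x \<Longrightarrow> oreal (oconj x)"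
  by (rule oc_exh[of x], simp)
lemma oreal_add: "oreal x \<Longrightarrow> oreal y \<Longrightarrow> oreal (x + y)"
  by (rule oc_exh[of x], rule oc_exh[of y], simp)
lemma oreal_ofc: "Im s = 0 \<Longrightarrow> oreal (ofc s)"
  by (simp add: ofc_def)
lemma oreal_oscale: "Im s = 0 \<Longrightarrow> oreal x \<Longrightarrow> oreal (oscale s x)"
  by (rule oc_exh[of x], simp add: oscale_def ofc_def)
lemma oreal_ore: "oreal x \<Longrightarrow> Im (ore x) = 0"
  by (rule oc_exh[of x], simp)
lemma oreal_conj_iff: "oreal (oconj x) = oreal x"
  by (rule oc_exh[of x], simp)
lemma oreal_onr: "oreal x \<Longrightarrow> Im (onr x) = 0 \<and> 0 \<le> Re (onr x)"
  apply (rule oc_exh[of x], hypsubst)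
  apply (simp add: onr_def ip_def)
  by (smt (verit) zero_le_square)

lemma sq_zero8: "(a1::real)*a1 + a2*a2 + a3*a3 + a4*a4 + a5*a5 + a6*a6 + a7*a7 + a8*a8 = 0 \<Longrightarrow>
   a1 = 0 \<and> a2 = 0 \<and> a3 = 0 \<and> a4 = 0 \<and> a5 = 0 \<and> a6 = 0 \<and> a7 = 0 \<and> a8 = 0"
  by (smt (verit) zero_le_square mult_eq_0_iff)

lemma oreal_onr_zero: "oreal x \<Longrightarrow> onr x = 0 \<Longrightarrow> x = 0"
proof (rule oc_exh[of x])
  fix x1 x2 x3 x4 x5 x6 x7 x8
  assume r: "oreal x" and n: "onr x = 0" and x: "x = (((x1, x2), x3, x4), (x5, x6), x7, x8)"
  have im: "Im x1 = 0" "Im x2 = 0" "Im x3 = 0" "Im x4 = 0" "Im x5 = 0" "Im x6 = 0" "Im x7 = 0" "Im x8 = 0"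
    using r x by simp_all
  have "Re (onr x) = 0" using n by simp
  hence "Re x1*Re x1 + Re x2*Re x2 + Re x3*Re x3 + Re x4*Re x4 + Re x5*Re x5 + Re x6*Re x6 + Re x7*Re x7 + Re x8*Re x8 = 0"
    using x im by (simp add: onr_def ip_def algebra_simps)
  hence "Re x1 = 0 \<and> Re x2 = 0 \<and> Re x3 = 0 \<and> Re x4 = 0 \<and> Re x5 = 0 \<and> Re x6 = 0 \<and> Re x7 = 0 \<and> Re x8 = 0"
    by (rule sq_zero8)
  thus "x = 0" using x im by (simp add: complex_eq_iff zero_prod_def)
qed


definition aut :: "(omat \<Rightarrow> omat) \<Rightarrow> bool" where
"aut f \<longleftrightarrow> (\<forall>X. herm X \<longrightarrow> herm (f X)) \<and>
   (\<forall>X Y. herm X \<longrightarrow> herm Y \<longrightarrow> f (jordan X Y) = jordan (f X) (f Y)) \<and>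
   (\<forall>X Y. herm X \<longrightarrow> herm Y \<longrightarrow> f (madd X Y) = madd (f X) (f Y)) \<and>
   (\<forall>s X. herm X \<longrightarrow> f (mscale s X) = mscale s (f X)) \<and>
   (\<forall>X. herm X \<longrightarrow> mtr (f X) = mtr X) \<and>
   (\<forall>X. herm X \<longrightarrow> f X = (\<lambda>i j. 0) \<longrightarrow> X = (\<lambda>i j. 0)) \<and>
   (\<forall>X. herm X \<longrightarrow> mreal X \<longrightarrow> mreal (f X))"

lemma aut_id: "aut (\<lambda>X. X)" by (simp add: aut_def)

lemma autD: assumes "aut f"
  shows "herm X \<Longrightarrow> herm (f X)" "herm X \<Longrightarrow> herm Y \<Longrightarrow> f (jordan X Y) = jordan (f X) (f Y)"
    "herm X \<Longrightarrow> herm Y \<Longrightarrow> f (madd X Y) = madd (f X) (f Y)"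
    "herm X \<Longrightarrow> f (mscale s X) = mscale s (f X)"
    "herm X \<Longrightarrow> mtr (f X) = mtr X"
    "herm X \<Longrightarrow> f X = (\<lambda>i j. 0) \<Longrightarrow> X = (\<lambda>i j. 0)"
    "herm X \<Longrightarrow> mreal X \<Longrightarrow> mreal (f X)"
  using assms unfolding aut_def by blast+

lemma aut_comp: assumes f: "aut f" and g: "aut g" shows "aut (\<lambda>X. g (f X))"
proof -
  note a = autD[OF f] and b = autD[OF g]
  show ?thesis unfolding aut_def
  proof (intro conjI allI impI)
    fix X assume X: "herm X"
    show "herm (g (f X))" using X a(1) b(1) by blast
    show "mtr (g (f X)) = mtr X" using X a(1,5) b(5) by metis
    fix s show "g (f (mscale s X)) = mscale s (g (f X))" using X a(1,4) b(4) by metis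
  next
    fix X assume X: "herm X" and z: "g (f X) = (\<lambda>i j. 0)"
    have "f X = (\<lambda>i j. 0)" using b(6)[OF a(1)[OF X] z] .
    thus "X = (\<lambda>i j. 0)" using a(6)[OF X] by blast
  next
    fix X assume X: "herm X" "mreal X" thus "mreal (g (f X))" using a(1,7) b(7) by blast
  next
    fix X Y assume X: "herm X" and Y: "herm Y"
    show "g (f (jordan X Y)) = jordan (g (f X)) (g (f Y))" using X Y a(1,2) b(2) by metis
    show "g (f (madd X Y)) = madd (g (f X)) (g (f Y))" using X Y a(1,3) b(3) by metis
  qed
qed

lemma aut_Zhat: assumes "aut f" "herm P" "herm Z" "herm X"
  shows "f (Zhat P Z X) = Zhat (f P) (f Z) (f X)"
proof -
  note a = autD[OF assms(1)]
  show ?thesis unfolding Zhat_def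
    using assms(2-4)
    by (simp add: a herm_jordan herm_madd herm_mscale)
qed

lemma aut_Zhat_pow: assumes "aut f" "herm P" "herm Z" "herm X"
  shows "f ((Zhat P Z ^^ n) X) = (Zhat (f P) (f Z) ^^ n) (f X) \<and> herm ((Zhat P Z ^^ n) X)"
proof (induct n)
  case 0 then show ?case using assms by simp
next
  case (Suc n)
  then show ?case using assms aut_Zhat[OF assms(1,2,3)] herm_Zhat by simp
qed

lemma mreal_hm: "mreal (hm a1 a2 a3 x1 x2 x3) \<longleftrightarrow> Im a1 = 0 \<and> Im a2 = 0 \<and> Im a3 = 0 \<and> oreal x1 \<and> oreal x2 \<and> oreal x3"
proof
  assume "mreal (hm a1 a2 a3 x1 x2 x3)"
  hence "\<And>i j. oreal (hm a1 a2 a3 x1 x2 x3 i j)" by (simp add: mreal_def)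
  from this[of 0 0] this[of 1 1] this[of 2 2] this[of 1 2] this[of 2 0] this[of 0 1]
  show "Im a1 = 0 \<and> Im a2 = 0 \<and> Im a3 = 0 \<and> oreal x1 \<and> oreal x2 \<and> oreal x3"
    by (simp add: ofc_def)
next
  assume r: "Im a1 = 0 \<and> Im a2 = 0 \<and> Im a3 = 0 \<and> oreal x1 \<and> oreal x2 \<and> oreal x3"
  show "mreal (hm a1 a2 a3 x1 x2 x3)" unfolding mreal_def
  proof (intro allI)
    fix i j :: 3
    show "oreal (hm a1 a2 a3 x1 x2 x3 i j)"
      using three_exh[of i] three_exh[of j] r by (auto simp: oreal_ofc oreal_conj)
  qed
qed

definition tmap :: "(oc \<Rightarrow> oc) \<Rightarrow> (oc \<Rightarrow> oc) \<Rightarrow> (oc \<Rightarrow> oc) \<Rightarrow> omat \<Rightarrow> omat" where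
"tmap T1 T2 T3 X = hm (ore (X 0 0)) (ore (X 1 1)) (ore (X 2 2)) (T1 (X 1 2)) (T2 (X 2 0)) (T3 (X 0 1))"

lemma tmap_hm: "tmap T1 T2 T3 (hm a1 a2 a3 x1 x2 x3) = hm a1 a2 a3 (T1 x1) (T2 x2) (T3 x3)"
  by (simp add: tmap_def ore_ofc)

lemma tmap_aut:
  assumes add: "\<And>x y. T1 (x + y) = T1 x + T1 y" "\<And>x y. T2 (x + y) = T2 x + T2 y" "\<And>x y. T3 (x + y) = T3 x + T3 y"
  and sc: "\<And>s x. T1 (oscale s x) = oscale s (T1 x)" "\<And>s x. T2 (oscale s x) = oscale s (T2 x)" "\<And>s x. T3 (oscale s x) = oscale s (T3 x)"
  and ipp: "\<And>x y. ip (T1 x) (T1 y) = ip x y" "\<And>x y. ip (T2 x) (T2 y) = ip x y" "\<And>x y. ip (T3 x) (T3 y) = ip x y"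
  and R3: "\<And>x y. oconj (omul (T1 x) (T2 y)) = T3 (oconj (omul x y))"
  and R1: "\<And>x y. oconj (omul (T2 x) (T3 y)) = T1 (oconj (omul x y))"
  and R2: "\<And>x y. oconj (omul (T3 x) (T1 y)) = T2 (oconj (omul x y))"
  and inj: "\<And>x. T1 x = 0 \<Longrightarrow> x = 0" "\<And>x. T2 x = 0 \<Longrightarrow> x = 0" "\<And>x. T3 x = 0 \<Longrightarrow> x = 0"
  and re: "\<And>x. oreal x \<Longrightarrow> oreal (T1 x)" "\<And>x. oreal x \<Longrightarrow> oreal (T2 x)" "\<And>x. oreal x \<Longrightarrow> oreal (T3 x)"
  shows "aut (tmap T1 T2 T3)"
proof -
  have z: "T1 0 = 0" "T2 0 = 0" "T3 0 = 0" using add(1)[of 0 0] add(2)[of 0 0] add(3)[of 0 0] by simp_all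
  show ?thesis unfolding aut_def
  proof (intro conjI allI impI)
    fix X assume "herm X" then obtain a1 a2 a3 x1 x2 x3 where X: "X = hm a1 a2 a3 x1 x2 x3" by (rule herm_ex)
    show "herm (tmap T1 T2 T3 X)" unfolding X tmap_hm by simp
    show "mtr (tmap T1 T2 T3 X) = mtr X" unfolding X tmap_hm mtr_hm ..
    fix s show "tmap T1 T2 T3 (mscale s X) = mscale s (tmap T1 T2 T3 X)"
      unfolding X tmap_hm mscale_hm by (simp add: sc)
  next
    fix X assume "herm X" then obtain a1 a2 a3 x1 x2 x3 where X: "X = hm a1 a2 a3 x1 x2 x3" by (rule herm_ex)
    assume "tmap T1 T2 T3 X = (\<lambda>i j. 0)"
    hence "a1 = 0 \<and> a2 = 0 \<and> a3 = 0 \<and> T1 x1 = 0 \<and> T2 x2 = 0 \<and> T3 x3 = 0"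
      unfolding X tmap_hm zero_hm hm_eq_iff .
    thus "X = (\<lambda>i j. 0)" unfolding X zero_hm hm_eq_iff using inj by blast
  next
    fix X assume "herm X" then obtain a1 a2 a3 x1 x2 x3 where X: "X = hm a1 a2 a3 x1 x2 x3" by (rule herm_ex)
    assume "mreal X" thus "mreal (tmap T1 T2 T3 X)" unfolding X tmap_hm mreal_hm using re by blast
  next
    fix X Y assume "herm X" "herm Y"
    then obtain a1 a2 a3 x1 x2 x3 b1 b2 b3 y1 y2 y3 where X: "X = hm a1 a2 a3 x1 x2 x3" and Y: "Y = hm b1 b2 b3 y1 y2 y3"
      by (metis herm_ex)
    show "tmap T1 T2 T3 (madd X Y) = madd (tmap T1 T2 T3 X) (tmap T1 T2 T3 Y)"
      unfolding X Y tmap_hm madd_hm by (simp add: add)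
    show "tmap T1 T2 T3 (jordan X Y) = jordan (tmap T1 T2 T3 X) (tmap T1 T2 T3 Y)"
      unfolding X Y tmap_hm jordan_hm hm_eq_iff jg1_def jg2_def jg3_def jc1_def jc2_def jc3_def
      by (simp add: add sc ipp R1 R2 R3)
  qed
qed


lemma unit_inj:
  assumes u: "onr u = 1"
  shows "omul u x = 0 \<Longrightarrow> x = 0" "omul x u = 0 \<Longrightarrow> x = 0"
    "omul (omul (oconj u) x) (oconj u) = 0 \<Longrightarrow> x = 0"
proof -
  show "omul u x = 0 \<Longrightarrow> x = 0" using alt2[of u x] u by (simp add: oscale_one omul_zero_right)
  show "omul x u = 0 \<Longrightarrow> x = 0" using alt3[of x u] u by (simp add: oscale_one omul_zero_left)
  assume h: "omul (omul (oconj u) x) (oconj u) = 0"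
  have "omul (oconj u) x = 0" using alt3[of "omul (oconj u) x" "oconj u"] h u
    by (simp add: oscale_one omul_zero_left oconj_oconj onr_oconj)
  thus "x = 0" using alt2[of "oconj u" x] u by (simp add: oscale_one omul_zero_right oconj_oconj onr_oconj)
qed

lemma bimul_lin: "omul (omul (oconj u) (x + y)) (oconj u) = omul (omul (oconj u) x) (oconj u) + omul (omul (oconj u) y) (oconj u)"
   "omul (omul (oconj u) (oscale s x)) (oconj u) = oscale s (omul (omul (oconj u) x) (oconj u))"
  by (simp_all only: omul_add_left omul_add_right omul_oscale_left omul_oscale_right)

lemma bimul_ip: "onr u = 1 \<Longrightarrow> ip (omul (omul (oconj u) x) (oconj u)) (omul (omul (oconj u) y) (oconj u)) = ip x y"
  by (simp only: idO5a idO5b onr_oconj mult_1)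

lemma unit_ip: "onr u = 1 \<Longrightarrow> ip (omul u x) (omul u y) = ip x y" "onr u = 1 \<Longrightarrow> ip (omul x u) (omul y u) = ip x y"
  by (simp_all only: idO5a idO5b mult_1)

lemma bimul_real: "oreal u \<Longrightarrow> oreal x \<Longrightarrow> oreal (omul (omul (oconj u) x) (oconj u))"
  by (intro oreal_mul oreal_conj)

lemma tripleA_aut: assumes u: "onr u = 1" and r: "oreal u"
  shows "aut (tmap (\<lambda>x. omul u x) (\<lambda>y. omul y u) (\<lambda>z. omul (omul (oconj u) z) (oconj u)))"
  apply (rule tmap_aut)
  apply (rule omul_add_right, rule omul_add_left, rule bimul_lin(1))
  apply (rule omul_oscale_right, rule omul_oscale_left, rule bimul_lin(2))
  apply (rule unit_ip(1)[OF u], rule unit_ip(2)[OF u], rule bimul_ip[OF u])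
  apply (rule TR_a)
  using TR_b u apply (simp only: oscale_one)
  using TR_c u apply (simp only: oscale_one)
  apply (erule unit_inj[OF u], erule unit_inj[OF u], erule unit_inj[OF u])
  apply (erule oreal_mul[OF r], erule oreal_mul[OF _ r], erule bimul_real[OF r])
  done

lemma tripleB_aut: assumes u: "onr u = 1" and r: "oreal u"
  shows "aut (tmap (\<lambda>z. omul (omul (oconj u) z) (oconj u)) (\<lambda>x. omul u x) (\<lambda>y. omul y u))"
  apply (rule tmap_aut)
  apply (rule bimul_lin(1), rule omul_add_right, rule omul_add_left)
  apply (rule bimul_lin(2), rule omul_oscale_right, rule omul_oscale_left)
  apply (rule bimul_ip[OF u], rule unit_ip(1)[OF u], rule unit_ip(2)[OF u])
  using TR_c u apply (simp only: oscale_one)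
  apply (rule TR_a)
  using TR_b u apply (simp only: oscale_one)
  apply (erule unit_inj[OF u], erule unit_inj[OF u], erule unit_inj[OF u])
  apply (erule bimul_real[OF r], erule oreal_mul[OF r], erule oreal_mul[OF _ r])
  done


definition sm :: "(3 \<Rightarrow> 3 \<Rightarrow> complex) \<Rightarrow> omat" where "sm R = (\<lambda>i j. ofc (R i j))"
definition tr3 :: "(3 \<Rightarrow> 3 \<Rightarrow> complex) \<Rightarrow> (3 \<Rightarrow> 3 \<Rightarrow> complex)" where "tr3 R = (\<lambda>i j. R j i)"
definition rot :: "(3 \<Rightarrow> 3 \<Rightarrow> complex) \<Rightarrow> omat \<Rightarrow> omat" where
  "rot R X = mmul (mmul (sm R) X) (sm (tr3 R))"

lemma ofc_coords:
  "fst (fst (fst (ofc s))) = s" "snd (fst (fst (ofc s))) = 0" "fst (snd (fst (ofc s))) = 0" "snd (snd (fst (ofc s))) = 0"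
  "fst (fst (snd (ofc s))) = 0" "snd (fst (snd (ofc s))) = 0" "fst (snd (snd (ofc s))) = 0" "snd (snd (snd (ofc s))) = 0"
  by (simp_all add: ofc_def)

lemma oconj_coords:
  "fst (fst (fst (oconj x))) = fst (fst (fst x))" "snd (fst (fst (oconj x))) = - snd (fst (fst x))"
  "fst (snd (fst (oconj x))) = - fst (snd (fst x))" "snd (snd (fst (oconj x))) = - snd (snd (fst x))"
  "fst (fst (snd (oconj x))) = - fst (fst (snd x))" "snd (fst (snd (oconj x))) = - snd (fst (snd x))"
  "fst (snd (snd (oconj x))) = - fst (snd (snd x))" "snd (snd (snd (oconj x))) = - snd (snd (snd x))"
  by (rule oc_exh[of x], simp)+

lemmas coord2_simps = coord_simps ofc_coords oconj_coords

lemma massoc1: "mmul (mmul (sm S) X) Y = mmul (sm S) (mmul X Y)"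
  apply (rule ext, rule ext)
  apply (simp only: mmul3 sm_def lin2_simps zero_simps)
  apply (simp only: coord_simps)
  apply (intro conjI)
  by algebra+

lemma massoc2: "mmul (mmul X (sm S)) Y = mmul X (mmul (sm S) Y)"
  apply (rule ext, rule ext)
  apply (simp only: mmul3 sm_def lin2_simps zero_simps)
  apply (simp only: coord_simps)
  apply (intro conjI)
  by algebra+

lemma massoc3: "mmul X (mmul Y (sm S)) = mmul (mmul X Y) (sm S)"
  apply (rule ext, rule ext)
  apply (simp only: mmul3 sm_def lin2_simps zero_simps)
  apply (simp only: coord_simps)
  apply (intro conjI)
  by algebra+


definition Id3 :: "3 \<Rightarrow> 3 \<Rightarrow> complex" where "Id3 = (\<lambda>i j. if i = j then 1 else 0)"
definition orth :: "(3 \<Rightarrow> 3 \<Rightarrow> complex) \<Rightarrow> bool" where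
  "orth R \<longleftrightarrow> (\<forall>i j. R 0 i * R 0 j + R 1 i * R 1 j + R 2 i * R 2 j = Id3 i j)"

lemma sm_Id3: "mmul (sm Id3) Y = Y"
proof (rule ext, rule ext)
  fix i j :: 3
  show "mmul (sm Id3) Y i j = Y i j"
    using three_exh[of i] by (auto simp: mmul3 sm_def Id3_def omul_ofc_left oscale_one ofc_zero omul_zero_left oscale_zero_left)
qed

lemma orth_sm: assumes "orth R" shows "mmul (sm (tr3 R)) (sm R) = sm Id3"
proof (rule ext, rule ext)
  fix i j :: 3
  have "R 0 i * R 0 j + R 1 i * R 1 j + R 2 i * R 2 j = Id3 i j" using assms by (simp add: orth_def)
  thus "mmul (sm (tr3 R)) (sm R) i j = sm Id3 i j"
    by (simp add: mmul3 sm_def tr3_def omul_ofc_left oscale_ofc ofc_add[symmetric])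
qed

lemma rot_mmul: assumes "orth R" shows "mmul (rot R X) (rot R Y) = rot R (mmul X Y)"
proof -
  have "mmul (rot R X) (rot R Y) = mmul (mmul (mmul (mmul (sm R) X) (sm (tr3 R))) (mmul (sm R) Y)) (sm (tr3 R))"
    unfolding rot_def by (rule massoc3)
  also have "mmul (mmul (mmul (sm R) X) (sm (tr3 R))) (mmul (sm R) Y) = mmul (mmul (sm R) X) (mmul (sm (tr3 R)) (mmul (sm R) Y))"
    by (rule massoc2)
  also have "mmul (sm (tr3 R)) (mmul (sm R) Y) = Y"
    by (simp only: massoc1[symmetric] orth_sm[OF assms] sm_Id3)
  finally show ?thesis unfolding rot_def by (simp only: massoc1)
qed

lemma rot_madd: "rot R (madd X Y) = madd (rot R X) (rot R Y)"
  apply (rule ext, rule ext)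
  apply (simp only: rot_def madd_def mmul3 sm_def lin2_simps zero_simps)
  apply (simp only: coord_simps)
  apply (intro conjI)
  by algebra+

lemma rot_mscale: "rot R (mscale s X) = mscale s (rot R X)"
  apply (rule ext, rule ext)
  apply (simp only: rot_def mscale_def mmul3 sm_def lin2_simps zero_simps)
  apply (simp only: coord_simps)
  apply (intro conjI)
  by algebra+

lemma jordan_alt: "jordan X Y = mscale (1/2) (madd (mmul X Y) (mmul Y X))"
  by (simp add: jordan_def mscale_def madd_def)

lemma rot_jordan: assumes "orth R" shows "rot R (jordan X Y) = jordan (rot R X) (rot R Y)"
  unfolding jordan_alt rot_mscale rot_madd rot_mmul[OF assms] ..

lemma rot_herm_hm: "herm (rot R (hm a1 a2 a3 x1 x2 x3))"
  unfolding herm_def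
proof (intro allI)
  fix i j :: 3
  show "rot R (hm a1 a2 a3 x1 x2 x3) j i = oconj (rot R (hm a1 a2 a3 x1 x2 x3) i j)"
    apply (simp only: rot_def mmul3 sm_def tr3_def hm_simps lin2_simps zero_simps)
    apply (simp only: coord2_simps)
    apply (intro conjI)
    by algebra+
qed

lemma rot_herm: "herm X \<Longrightarrow> herm (rot R X)"
  by (metis herm_ex rot_herm_hm)


lemma sm_Id3_right: "mmul Y (sm Id3) = Y"
proof (rule ext, rule ext)
  fix i j :: 3
  show "mmul Y (sm Id3) i j = Y i j"
    using three_exh[of j] by (auto simp: mmul3 sm_def Id3_def omul_ofc_right oscale_one ofc_zero omul_zero_right oscale_zero_left)
qed

lemma tr3_tr3[simp]: "tr3 (tr3 R) = R" by (simp add: tr3_def)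

lemma rot_inv: assumes "orth R" shows "rot (tr3 R) (rot R X) = X"
proof -
  have "rot (tr3 R) (rot R X) = mmul (mmul (mmul (sm (tr3 R)) (mmul (sm R) X)) (sm (tr3 R))) (sm R)"
    unfolding rot_def tr3_tr3 by (simp only: massoc3)
  also have "mmul (sm (tr3 R)) (mmul (sm R) X) = X"
    by (simp only: massoc1[symmetric] orth_sm[OF assms] sm_Id3)
  finally show ?thesis by (simp only: massoc2 orth_sm[OF assms] sm_Id3_right)
qed

lemma rot_zero: "rot R (\<lambda>i j. 0) = (\<lambda>i j. 0)"
  by (rule ext, rule ext) (simp add: rot_def mmul3 omul_zero_left omul_zero_right)

lemma rot_inj: assumes "orth R" "rot R X = (\<lambda>i j. 0)" shows "X = (\<lambda>i j. 0)"
  using rot_inv[OF assms(1), of X] assms(2) rot_zero by metis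

lemma rot_real: assumes "\<And>i j. Im (R i j) = 0" "mreal X" shows "mreal (rot R X)"
proof -
  have x: "\<And>i j. oreal (X i j)" using assms(2) by (simp add: mreal_def)
  show ?thesis unfolding mreal_def
    by (intro allI, simp only: rot_def mmul3 sm_def tr3_def)
       (intro oreal_add oreal_mul oreal_ofc x assms(1))
qed

lemma rot_mtr: assumes o: "orth R" and h: "herm X" shows "mtr (rot R X) = mtr X"
proof -
  obtain a1 a2 a3 x1 x2 x3 where X: "X = hm a1 a2 a3 x1 x2 x3" using herm_ex[OF h] .
  have oo: "\<And>i j. R 0 i * R 0 j + R 1 i * R 1 j + R 2 i * R 2 j = Id3 i j" using o by (simp add: orth_def)
  note o00 = oo[of 0 0] and o01 = oo[of 0 1] and o02 = oo[of 0 2] and o11 = oo[of 1 1] and o12 = oo[of 1 2] and o22 = oo[of 2 2]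
  show ?thesis
    unfolding X mtr_hm
    apply (simp only: mtr_def sum3 rot_def mmul3 sm_def tr3_def hm_simps lin2_simps zero_simps ore_add ore_oscale ore_ofc ore_oconj)
    using o00 o01 o02 o11 o12 o22 unfolding Id3_def by simp algebra
qed

lemma rot_aut: assumes o: "orth R" and r: "\<And>i j. Im (R i j) = 0" shows "aut (rot R)"
  unfolding aut_def
  apply (intro conjI allI impI)
  apply (erule rot_herm)
  apply (rule rot_jordan[OF o])
  apply (rule rot_madd)
  apply (rule rot_mscale)
  apply (erule rot_mtr[OF o])
  apply (erule rot_inj[OF o])
  apply (erule rot_real[OF r])
  done


lemma solve3: "a * a + n3 + n2 = (a::complex) \<Longrightarrow> b * b + n3 + n1 = b \<Longrightarrow> c * c + n2 + n1 = c \<Longrightarrow> a + b + c = 1 \<Longrightarrow> n3 = a * b"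
proof -
  assume e1: "a * a + n3 + n2 = (a::complex)" and e2: "b * b + n3 + n1 = b" and e3: "c * c + n2 + n1 = c" and s: "a + b + c = 1"
  have c: "c = 1 - a - b" using s by (simp add: algebra_simps)
  have "2 * n3 - ((a - a*a) + (b - b*b) - (c - c*c)) = (a*a + n3 + n2 - a) + (b*b + n3 + n1 - b) - (c*c + n2 + n1 - c)"
    by (simp add: algebra_simps)
  also have "\<dots> = 0" using e1 e2 e3 by simp
  finally have "2 * n3 = (a - a*a) + (b - b*b) - (c - c*c)" by simp
  also have "\<dots> = 2 * (a * b)" unfolding c by (simp add: algebra_simps)
  finally show "n3 = a * b" by simp
qed

lemma aut_OP2: assumes f: "aut f" and P: "P \<in> OP2" shows "f P \<in> OP2"
proof -
  note a = autD[OF f]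
  have h: "herm P" "mreal P" "jordan P P = P" "mtr P = 1" using P by (auto simp: OP2_def)
  show ?thesis unfolding OP2_def
    using a(1)[OF h(1)] a(7)[OF h(1,2)] a(2)[OF h(1) h(1)] h(3) a(5)[OF h(1)] h(4) by auto
qed

lemma OP2_eqs: assumes "hm a b c x1 x2 x3 \<in> OP2"
  shows "a * a + onr x3 + onr x2 = a" "b * b + onr x3 + onr x1 = b" "c * c + onr x2 + onr x1 = c" "a + b + c = 1"
    "Im a = 0" "Im b = 0" "Im c = 0" "oreal x1" "oreal x2" "oreal x3"
proof -
  have j: "jordan (hm a b c x1 x2 x3) (hm a b c x1 x2 x3) = hm a b c x1 x2 x3" and t: "mtr (hm a b c x1 x2 x3) = 1"
    and r: "mreal (hm a b c x1 x2 x3)" using assms by (auto simp: OP2_def)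
  from j show "a * a + onr x3 + onr x2 = a" "b * b + onr x3 + onr x1 = b" "c * c + onr x2 + onr x1 = c"
    unfolding jordan_hm hm_eq_iff jg1_def jg2_def jg3_def by (simp_all add: ip_self)
  from t show "a + b + c = 1" by (simp add: mtr_hm)
  from r show "Im a = 0" "Im b = 0" "Im c = 0" "oreal x1" "oreal x2" "oreal x3" by (simp_all add: mreal_hm)
qed

lemma OP2_hm: assumes "hm a b c x1 x2 x3 \<in> OP2"
  shows "onr x3 = a*b \<and> onr x2 = a*c \<and> onr x1 = b*c \<and> a + b + c = 1 \<and> Im a = 0 \<and> Im b = 0 \<and> Im c = 0
     \<and> oreal x1 \<and> oreal x2 \<and> oreal x3"
proof -
  note e = OP2_eqs[OF assms]
  have e1': "a * a + onr x2 + onr x3 = a" using e(1) by (simp add: ac_simps)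
  have e2'': "b * b + onr x1 + onr x3 = b" using e(2) by (simp add: ac_simps)
  have e3'': "c * c + onr x1 + onr x2 = c" using e(3) by (simp add: ac_simps)
  have e1'': "a * a + onr x3 + onr x2 = a" using e(1) .
  have s': "a + c + b = 1" "b + c + a = 1" using e(4) by (simp_all add: ac_simps)
  have "onr x3 = a*b" by (rule solve3[OF e(1) e(2) e(3) e(4)])
  moreover have "onr x2 = a*c" by (rule solve3[OF e1' e(3) e(2) s'(1)])
  moreover have "onr x1 = b*c" by (rule solve3[OF e2'' e3'' e1'' s'(2)])
  ultimately show ?thesis using e by simp
qed

lemma OP2_diag: assumes "hm a b c x1 x2 x3 \<in> OP2"
  shows "0 \<le> Re a" "0 \<le> Re b" "0 \<le> Re c"
proof -
  note e = OP2_eqs[OF assms]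
  have n: "0 \<le> Re (onr x1)" "0 \<le> Re (onr x2)" "0 \<le> Re (onr x3)" using e(8,9,10) oreal_onr by blast+
  have "Re a * Re a + Re (onr x3) + Re (onr x2) = Re a" using arg_cong[OF e(1), of Re] e(5) by simp
  thus "0 \<le> Re a" using n zero_le_square[of "Re a"] by linarith
  have "Re b * Re b + Re (onr x3) + Re (onr x1) = Re b" using arg_cong[OF e(2), of Re] e(6) by simp
  thus "0 \<le> Re b" using n zero_le_square[of "Re b"] by linarith
  have "Re c * Re c + Re (onr x2) + Re (onr x1) = Re c" using arg_cong[OF e(3), of Re] e(7) by simp
  thus "0 \<le> Re c" using n zero_le_square[of "Re c"] by linarith
qed


definition mk3 :: "complex \<Rightarrow> complex \<Rightarrow> complex \<Rightarrow> complex \<Rightarrow> complex \<Rightarrow> complex \<Rightarrow> complex \<Rightarrow> complex \<Rightarrow> complex \<Rightarrow> 3 \<Rightarrow> 3 \<Rightarrow> complex" where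
 "mk3 r00 r01 r02 r10 r11 r12 r20 r21 r22 = (\<lambda>i j. if i = 0 then (if j = 0 then r00 else if j = 1 then r01 else r02)
   else if i = 1 then (if j = 0 then r10 else if j = 1 then r11 else r12) else (if j = 0 then r20 else if j = 1 then r21 else r22))"

lemma mk3_simps[simp]: "mk3 r00 r01 r02 r10 r11 r12 r20 r21 r22 0 0 = r00" "mk3 r00 r01 r02 r10 r11 r12 r20 r21 r22 0 1 = r01"
  "mk3 r00 r01 r02 r10 r11 r12 r20 r21 r22 0 2 = r02" "mk3 r00 r01 r02 r10 r11 r12 r20 r21 r22 1 0 = r10"
  "mk3 r00 r01 r02 r10 r11 r12 r20 r21 r22 1 1 = r11" "mk3 r00 r01 r02 r10 r11 r12 r20 r21 r22 1 2 = r12"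
  "mk3 r00 r01 r02 r10 r11 r12 r20 r21 r22 2 0 = r20" "mk3 r00 r01 r02 r10 r11 r12 r20 r21 r22 2 1 = r21"
  "mk3 r00 r01 r02 r10 r11 r12 r20 r21 r22 2 2 = r22"
  by (simp_all add: mk3_def)

lemma orthI: assumes "\<And>i j. i \<in> {0,1,2} \<Longrightarrow> j \<in> {0,1,2} \<Longrightarrow> R 0 i * R 0 j + R 1 i * R 1 j + R 2 i * R 2 j = Id3 i j"
  shows "orth R"
  unfolding orth_def
proof (intro allI)
  fix i j :: 3
  have "i \<in> {0,1,2}" "j \<in> {0,1,2}" using three_exh[of i] three_exh[of j] by auto
  thus "R 0 i * R 0 j + R 1 i * R 1 j + R 2 i * R 2 j = Id3 i j" using assms by blast
qed


lemma onr_oscale: "onr (oscale s x) = s * s * onr x"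
  by (simp add: onr_def ip_oscale_left ip_oscale_right)

lemma onr_ofc: "onr (ofc s) = s * s"
  by (simp add: onr_def ip_def ofc_def)

lemma unit_real: assumes r: "oreal x" and nz: "x \<noteq> 0"
  shows "\<exists>u t. onr u = 1 \<and> oreal u \<and> omul x u = ofc (of_real t) \<and> 0 \<le> t"
proof -
  have o: "Im (onr x) = 0" "0 \<le> Re (onr x)" using oreal_onr[OF r] by auto
  have "onr x \<noteq> 0" using oreal_onr_zero[OF r] nz by blast
  hence pos: "0 < Re (onr x)" using o by (metis complex_eq_iff order_le_less zero_complex.sel(1) zero_complex.sel(2))
  define t where "t = sqrt (Re (onr x))"
  have tpos: "0 < t" using pos by (simp add: t_def)
  have nx: "onr x = of_real (t * t)" using o pos by (simp add: t_def complex_eq_iff)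
  define u where "u = oscale (of_real (1/t)) (oconj x)"
  have "onr u = of_real (1/t) * of_real (1/t) * of_real (t*t)" by (simp add: u_def onr_oscale onr_oconj nx)
  also have "\<dots> = 1" using tpos by (simp add: field_simps)
  finally have u1: "onr u = 1" .
  have ur: "oreal u" unfolding u_def by (intro oreal_oscale oreal_conj r) simp
  have "omul x u = oscale (of_real (1/t)) (ofc (onr x))" by (simp add: u_def omul_oscale_right mul_conj_self)
  also have "\<dots> = ofc (of_real t)" using tpos by (simp add: oscale_ofc nx field_simps)
  finally show ?thesis using u1 ur tpos by (intro exI[of _ u] exI[of _ t]) auto
qed

lemma stepA: assumes "hm a b c x1 x2 x3 \<in> OP2"
  shows "\<exists>f y1 y2 t. aut f \<and> f (hm a b c x1 x2 x3) = hm a b c y1 y2 (ofc (of_real t)) \<and> 0 \<le> t"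
proof (cases "x3 = 0")
  case True
  then show ?thesis using aut_id by (intro exI[of _ "\<lambda>X. X"] exI[of _ x1] exI[of _ x2] exI[of _ 0]) (simp add: ofc_zero)
next
  case False
  have r: "oreal x3" using OP2_hm[OF assms] by blast
  obtain u t where u: "onr u = 1" "oreal u" "omul x3 u = ofc (of_real t)" "0 \<le> t" using unit_real[OF r False] by blast
  let ?f = "tmap (\<lambda>z. omul (omul (oconj u) z) (oconj u)) (\<lambda>x. omul u x) (\<lambda>y. omul y u)"
  have "aut ?f" by (rule tripleB_aut[OF u(1,2)])
  moreover have "?f (hm a b c x1 x2 x3) = hm a b c (omul (omul (oconj u) x1) (oconj u)) (omul u x2) (ofc (of_real t))"
    by (simp add: tmap_hm u(3))
  ultimately show ?thesis using u(4) by blast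
qed

lemma OP2_b0: assumes "hm a 0 c z1 z2 z3 \<in> OP2" shows "z1 = 0" "z3 = 0"
proof -
  note o = OP2_hm[OF assms]
  show "z1 = 0" using o oreal_onr_zero by simp
  show "z3 = 0" using o oreal_onr_zero by simp
qed

lemma sqrt_fact: fixes ar br t :: real
  assumes "0 \<le> ar" "0 \<le> br" "0 \<le> t" "t*t = ar*br" "0 < ar + br"
  shows "sqrt (br/(ar+br)) * sqrt (ar/(ar+br)) = t / (ar+br)"
proof -
  let ?s = "ar + br"
  have "sqrt (t*t) = t" using assms(3) by simp
  hence tt: "t = sqrt (ar * br)" using assms(4) by simp
  have "sqrt (br/?s) * sqrt (ar/?s) = sqrt ((ar*br) / (?s * ?s))"
    by (simp add: real_sqrt_mult[symmetric] mult.commute)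
  also have "\<dots> = sqrt (ar*br) / sqrt (?s * ?s)" by (rule real_sqrt_divide)
  also have "sqrt (?s * ?s) = ?s" using assms(5) by simp
  finally show ?thesis using tt by simp
qed

lemma rotB_arith: fixes ar br t :: real
  assumes "0 \<le> ar" "0 \<le> br" "0 \<le> t" "t*t = ar*br" "0 < ar + br"
  shows "sqrt (ar/(ar+br)) * sqrt (ar/(ar+br)) + sqrt (br/(ar+br)) * sqrt (br/(ar+br)) = 1"
    "sqrt (br/(ar+br)) * sqrt (br/(ar+br)) * ar - 2 * sqrt (br/(ar+br)) * sqrt (ar/(ar+br)) * t
       + sqrt (ar/(ar+br)) * sqrt (ar/(ar+br)) * br = 0"
proof -
  let ?s = "ar + br"
  define C where "C = sqrt (ar/?s)"
  define S where "S = sqrt (br/?s)"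
  have cc: "C * C = ar/?s" using assms unfolding C_def by simp
  have ss: "S * S = br/?s" using assms unfolding S_def by simp
  have sc: "S * C = t / ?s" using sqrt_fact[OF assms] unfolding S_def C_def .
  show "C * C + S * S = 1" unfolding cc ss using assms(5) by (simp add: add_divide_distrib[symmetric])
  have "S * S * ar - 2 * S * C * t + C * C * br = (S * S) * ar - 2 * (S * C) * t + (C * C) * br" by (simp add: mult.assoc)
  also have "\<dots> = (br * ar - 2 * (t * t) + ar * br) / ?s" unfolding cc ss sc by (simp add: diff_divide_distrib add_divide_distrib)
  also have "\<dots> = 0" using assms(4) by simp
  finally show "S * S * ar - 2 * S * C * t + C * C * br = 0" .
qed


lemma herm_hm_form: "herm Q \<Longrightarrow> ore (Q 1 1) = 0 \<Longrightarrow> Q = hm (ore (Q 0 0)) 0 (ore (Q 2 2)) (Q 1 2) (Q 2 0) (Q 0 1)"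
  using hm_of_herm by metis

lemma real_Id3: "Im (mk3 r00 r01 r02 r10 r11 r12 r20 r21 r22 i j) = 0"
  if "Im r00 = 0" "Im r01 = 0" "Im r02 = 0" "Im r10 = 0" "Im r11 = 0" "Im r12 = 0" "Im r20 = 0" "Im r21 = 0" "Im r22 = 0"
  using that three_exh[of i] three_exh[of j] by auto

lemma stepB: assumes P: "hm a b c y1 y2 (ofc (of_real t)) \<in> OP2" and t0: "0 \<le> t"
  shows "\<exists>f a' c' z2. aut f \<and> f (hm a b c y1 y2 (ofc (of_real t))) = hm a' 0 c' 0 z2 0"
proof -
  note o = OP2_hm[OF P]
  obtain ar br where ar: "a = of_real ar" "b = of_real br"
    using o by (metis complex_of_real_def complex_surj)
  have nn: "0 \<le> ar" "0 \<le> br" using OP2_diag[OF P] ar by auto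
  have "of_real (t * t) = a * b" using o by (simp add: onr_ofc)
  hence tt: "t * t = ar * br" unfolding ar of_real_mult[symmetric] of_real_eq_iff .
  show ?thesis
  proof (cases "ar + br = 0")
    case True
    hence z: "a = 0" "b = 0" using nn ar by simp_all
    have P0: "hm a 0 c y1 y2 (ofc (of_real t)) \<in> OP2" using P z by simp
    have "y1 = 0" "ofc (of_real t) = 0" using OP2_b0[OF P0] by auto
    thus ?thesis using aut_id z by (intro exI[of _ "\<lambda>X. X"] exI[of _ a] exI[of _ c] exI[of _ y2]) simp
  next
    case False
    hence spos: "0 < ar + br" using nn by simp
    define C where "C = sqrt (ar / (ar + br))"
    define S where "S = sqrt (br / (ar + br))"
    note ar1 = rotB_arith[OF nn t0 tt spos, folded C_def S_def]
    define R where "R = mk3 (of_real C) (of_real S) 0 (- of_real S) (of_real C) 0 0 0 1"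
    have cs: "of_real C * of_real C + of_real S * of_real S = (1::complex)"
      using arg_cong[OF ar1(1), of complex_of_real] by simp
    have orth: "orth R" unfolding R_def
    proof (rule orthI)
      fix i j :: 3 assume "i \<in> {0,1,2}" "j \<in> {0,1,2}"
      thus "mk3 (of_real C) (of_real S) 0 (- of_real S) (of_real C) 0 0 0 1 0 i * mk3 (of_real C) (of_real S) 0 (- of_real S) (of_real C) 0 0 0 1 0 j +
          mk3 (of_real C) (of_real S) 0 (- of_real S) (of_real C) 0 0 0 1 1 i * mk3 (of_real C) (of_real S) 0 (- of_real S) (of_real C) 0 0 0 1 1 j +
          mk3 (of_real C) (of_real S) 0 (- of_real S) (of_real C) 0 0 0 1 2 i * mk3 (of_real C) (of_real S) 0 (- of_real S) (of_real C) 0 0 0 1 2 j = Id3 i j"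
        using cs by (auto simp: Id3_def algebra_simps)
    qed
    have re: "\<And>i j. Im (R i j) = 0" unfolding R_def by (rule real_Id3) simp_all
    have f: "aut (rot R)" by (rule rot_aut[OF orth re])
    let ?Q = "rot R (hm a b c y1 y2 (ofc (of_real t)))"
    have Q: "?Q \<in> OP2" by (rule aut_OP2[OF f P])
    have "ore (?Q 1 1) = of_real (S * S * ar - 2 * S * C * t + C * C * br)"
      unfolding R_def ar
      apply (simp only: rot_def mmul3 sm_def tr3_def hm_simps mk3_simps lin2_simps zero_simps ore_add ore_oscale ore_ofc ore_oconj ofc_zero oscale_ofc ore_zero)
      by (simp add: algebra_simps)
    also have "\<dots> = 0" using ar1(2) by simp
    finally have q11: "ore (?Q 1 1) = 0" .
    have hq: "herm ?Q" using Q by (simp add: OP2_def)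
    note Qf = herm_hm_form[OF hq q11]
    have Q2: "hm (ore (?Q 0 0)) 0 (ore (?Q 2 2)) (?Q 1 2) (?Q 2 0) (?Q 0 1) \<in> OP2"
      by (subst Qf[symmetric]) (rule Q)
    note zz = OP2_b0[OF Q2]
    have "?Q = hm (ore (?Q 0 0)) 0 (ore (?Q 2 2)) 0 (?Q 2 0) 0" using Qf[unfolded zz] .
    thus ?thesis using f by blast
  qed
qed


lemma stepC: assumes P: "hm a 0 c 0 z2 0 \<in> OP2"
  shows "\<exists>f r. aut f \<and> f (hm a 0 c 0 z2 0) = hm a 0 c 0 (ofc (of_real r)) 0 \<and> 0 \<le> r"
proof (cases "z2 = 0")
  case True
  then show ?thesis using aut_id by (intro exI[of _ "\<lambda>X. X"] exI[of _ 0]) (simp add: ofc_zero)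
next
  case False
  have r: "oreal z2" using OP2_hm[OF P] by blast
  obtain u t where u: "onr u = 1" "oreal u" "omul z2 u = ofc (of_real t)" "0 \<le> t" using unit_real[OF r False] by blast
  let ?f = "tmap (\<lambda>x. omul u x) (\<lambda>y. omul y u) (\<lambda>z. omul (omul (oconj u) z) (oconj u))"
  have "aut ?f" by (rule tripleA_aut[OF u(1,2)])
  moreover have "?f (hm a 0 c 0 z2 0) = hm a 0 c 0 (ofc (of_real t)) 0"
    by (simp add: tmap_hm u(3) omul_zero_left omul_zero_right)
  ultimately show ?thesis using u(4) by blast
qed

lemma OP2_final: assumes P: "hm a 0 0 z1 z2 z3 \<in> OP2" shows "hm a 0 0 z1 z2 z3 = hm 1 0 0 0 0 0"
proof -
  note o = OP2_hm[OF P]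
  have "z1 = 0" "z2 = 0" "z3 = 0" using o oreal_onr_zero by simp_all
  moreover have "a = 1" using o by simp
  ultimately show ?thesis by simp
qed

lemma stepD: assumes P: "hm a 0 c 0 (ofc (of_real t)) 0 \<in> OP2" and t0: "0 \<le> t"
  shows "\<exists>f. aut f \<and> f (hm a 0 c 0 (ofc (of_real t)) 0) = hm 1 0 0 0 0 0"
proof -
  note o = OP2_hm[OF P]
  obtain ar cr where ar: "a = of_real ar" "c = of_real cr"
    using o by (metis complex_of_real_def complex_surj)
  have nn: "0 \<le> ar" "0 \<le> cr" using OP2_diag[OF P] ar by auto
  have "of_real (t * t) = a * c" using o by (simp add: onr_ofc)
  hence tt: "t * t = ar * cr" unfolding ar of_real_mult[symmetric] of_real_eq_iff .
  have "of_real (ar + cr) = (1::complex)" using o ar by simp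
  hence s1: "ar + cr = 1" by (metis of_real_1 of_real_eq_iff)
  hence spos: "0 < ar + cr" by simp
  define C where "C = sqrt (ar / (ar + cr))"
  define S where "S = sqrt (cr / (ar + cr))"
  note ar1 = rotB_arith[OF nn t0 tt spos, folded C_def S_def]
  define R where "R = mk3 (of_real C) 0 (of_real S) 0 1 0 (- of_real S) 0 (of_real C)"
  have cs: "of_real C * of_real C + of_real S * of_real S = (1::complex)"
    using arg_cong[OF ar1(1), of complex_of_real] by simp
  have orth: "orth R" unfolding R_def
  proof (rule orthI)
    fix i j :: 3 assume "i \<in> {0,1,2}" "j \<in> {0,1,2}"
    thus "mk3 (of_real C) 0 (of_real S) 0 1 0 (- of_real S) 0 (of_real C) 0 i * mk3 (of_real C) 0 (of_real S) 0 1 0 (- of_real S) 0 (of_real C) 0 j +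
        mk3 (of_real C) 0 (of_real S) 0 1 0 (- of_real S) 0 (of_real C) 1 i * mk3 (of_real C) 0 (of_real S) 0 1 0 (- of_real S) 0 (of_real C) 1 j +
        mk3 (of_real C) 0 (of_real S) 0 1 0 (- of_real S) 0 (of_real C) 2 i * mk3 (of_real C) 0 (of_real S) 0 1 0 (- of_real S) 0 (of_real C) 2 j = Id3 i j"
      using cs by (auto simp: Id3_def algebra_simps)
  qed
  have re: "\<And>i j. Im (R i j) = 0" unfolding R_def by (rule real_Id3) simp_all
  have f: "aut (rot R)" by (rule rot_aut[OF orth re])
  let ?Q = "rot R (hm a 0 c 0 (ofc (of_real t)) 0)"
  have Q: "?Q \<in> OP2" by (rule aut_OP2[OF f P])
  have "ore (?Q 2 2) = of_real (S * S * ar - 2 * S * C * t + C * C * cr)"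
    unfolding R_def ar
    apply (simp only: rot_def mmul3 sm_def tr3_def hm_simps mk3_simps lin2_simps zero_simps ore_add ore_oscale ore_ofc ore_oconj ofc_zero oscale_ofc ore_zero)
    by (simp add: algebra_simps)
  also have "\<dots> = 0" using ar1(2) by simp
  finally have q22: "ore (?Q 2 2) = 0" .
  have q11: "ore (?Q 1 1) = 0"
    unfolding R_def ar
    apply (simp only: rot_def mmul3 sm_def tr3_def hm_simps mk3_simps lin2_simps zero_simps ore_add ore_oscale ore_ofc ore_oconj ofc_zero oscale_ofc ore_zero)
    by (simp add: algebra_simps)
  have hq: "herm ?Q" using Q by (simp add: OP2_def)
  have Qf: "?Q = hm (ore (?Q 0 0)) 0 0 (?Q 1 2) (?Q 2 0) (?Q 0 1)"
    using hm_of_herm[OF hq] unfolding q11 q22 .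
  have Q2: "hm (ore (?Q 0 0)) 0 0 (?Q 1 2) (?Q 2 0) (?Q 0 1) \<in> OP2"
    by (subst Qf[symmetric]) (rule Q)
  have "?Q = hm 1 0 0 0 0 0" using Qf OP2_final[OF Q2] by (rule trans)
  thus ?thesis using f by blast
qed

lemma NF: assumes P: "P \<in> OP2" shows "\<exists>f. aut f \<and> f P = hm 1 0 0 0 0 0"
proof -
  have "herm P" using P by (simp add: OP2_def)
  then obtain a b c x1 x2 x3 where Pe: "P = hm a b c x1 x2 x3" by (rule herm_ex)
  have P0: "hm a b c x1 x2 x3 \<in> OP2" using P Pe by simp
  obtain f1 y1 y2 t where f1: "aut f1" "f1 (hm a b c x1 x2 x3) = hm a b c y1 y2 (ofc (of_real t))" "0 \<le> t"
    using stepA[OF P0] by blast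
  have P1: "hm a b c y1 y2 (ofc (of_real t)) \<in> OP2" using aut_OP2[OF f1(1) P0] f1(2) by simp
  obtain f2 a' c' z2 where f2: "aut f2" "f2 (hm a b c y1 y2 (ofc (of_real t))) = hm a' 0 c' 0 z2 0"
    using stepB[OF P1 f1(3)] by blast
  have P2: "hm a' 0 c' 0 z2 0 \<in> OP2" using aut_OP2[OF f2(1) P1] f2(2) by simp
  obtain f3 r where f3: "aut f3" "f3 (hm a' 0 c' 0 z2 0) = hm a' 0 c' 0 (ofc (of_real r)) 0" "0 \<le> r"
    using stepC[OF P2] by blast
  have P3: "hm a' 0 c' 0 (ofc (of_real r)) 0 \<in> OP2" using aut_OP2[OF f3(1) P2] f3(2) by simp
  obtain f4 where f4: "aut f4" "f4 (hm a' 0 c' 0 (ofc (of_real r)) 0) = hm 1 0 0 0 0 0"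
    using stepD[OF P3 f3(3)] by blast
  have "aut (\<lambda>X. f4 (f3 (f2 (f1 X))))"
    by (intro aut_comp[OF aut_comp[OF aut_comp[OF f1(1) f2(1)] f3(1)] f4(1), simplified])
  moreover have "f4 (f3 (f2 (f1 P))) = hm 1 0 0 0 0 0" using Pe f1(2) f2(2) f3(2) f4(2) by simp
  ultimately show ?thesis by blast
qed


lemma jordan_madd_right: "jordan X (madd A B) = madd (jordan X A) (jordan X B)"
  apply (rule ext, rule ext)
  apply (simp only: jordan_def madd_def mmul3 lin2_simps zero_simps)
  apply (simp only: coord_simps)
  apply (intro conjI)
  by algebra+

lemma mscale_madd: "mscale s (madd A B) = madd (mscale s A) (mscale s B)"
  by (rule ext, rule ext) (simp add: mscale_def madd_def oscale_add)

lemma Zhat_madd: "Zhat P Z (madd A B) = madd (Zhat P Z A) (Zhat P Z B)"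
  unfolding Zhat_def jordan_madd_right mscale_madd
  apply (rule ext, rule ext)
  by (simp add: madd_def algebra_simps)

lemma Zhat_pow_madd: "(Zhat P Z ^^ n) (madd A B) = madd ((Zhat P Z ^^ n) A) ((Zhat P Z ^^ n) B)"
  by (induct n) (simp_all add: Zhat_madd)

lemma pow5: "(f ^^ 5) x = f (f (f (f (f x))))"
  by (simp add: numeral_eq_Suc)

lemma E11_TC: assumes "Z \<in> TC (hm 1 0 0 0 0 0)" shows "\<exists>z2 z3. Z = hm 0 0 0 0 z2 z3"
proof -
  have h: "herm Z" and e: "mscale 2 (jordan (hm 1 0 0 0 0 0) Z) = Z" using assms by (auto simp: TC_def)
  obtain a1 a2 a3 w1 w2 w3 where Z: "Z = hm a1 a2 a3 w1 w2 w3" using herm_ex[OF h] .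
  from e have "2 * a1 = a1 \<and> 0 = a2 \<and> 0 = a3 \<and> 0 = w1"
    unfolding Z jordan_hm mscale_hm hm_eq_iff jg1_def jg2_def jg3_def jc1_def
    by (simp add: zero_simps lin2_simps)
  hence "a1 = 0" "a2 = 0" "a3 = 0" "w1 = 0" by auto
  thus ?thesis using Z by blast
qed

lemma onr_zero: "onr 0 = 0" by (simp add: onr_def ip_zero_left)

lemma E11_iso: "mtr (jordan (hm 0 0 0 0 z2 z3) (hm 0 0 0 0 z2 z3)) = 2 * (onr z2 + onr z3)"
  unfolding jordan_hm mtr_hm jg1_def jg2_def jg3_def by (simp add: ip_self zero_simps onr_zero)

lemma E11_main: assumes Z: "Z \<in> TC (hm 1 0 0 0 0 0)" and iso: "mtr (jordan Z Z) = 0" and X: "herm X"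
  shows "(Zhat (hm 1 0 0 0 0 0) Z ^^ 5) X = (\<lambda>i j. 0)" "mtr (Zhat (hm 1 0 0 0 0 0) Z X) = 0"
proof -
  obtain z2 z3 where Ze: "Z = hm 0 0 0 0 z2 z3" using E11_TC[OF Z] by blast
  have "2 * (onr z2 + onr z3) = 0" using iso unfolding Ze E11_iso .
  hence N: "onr z2 + onr z3 = 0" by (subst (asm) mult_eq_0_iff) simp
  obtain a1 a2 a3 x1 x2 x3 where Xe: "X = hm a1 a2 a3 x1 x2 x3" using herm_ex[OF X] .
  let ?f = "Zhat (hm 1 0 0 0 0 0) (hm 0 0 0 0 z2 z3)"
  have Xsplit: "hm a1 a2 a3 x1 x2 x3 = madd (hm a1 a2 a3 x1 0 0) (hm 0 0 0 0 x2 x3)"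
    by (simp add: madd_hm)
  have z0: "?f (hm 0 0 0 0 0 0) = hm 0 0 0 0 0 0"
    unfolding zhat_formula by (simp add: zero_simps lin2_simps)
  have p1: "(?f ^^ 5) (hm 0 0 0 0 x2 x3) = hm 0 0 0 0 0 0"
    unfolding pow5 zh4[OF N] z0 ..
  have "?f (hm a1 a2 a3 x1 0 0) = hm 0 0 0 0 (oscale (a1 - a3) z2 - oconj (omul z3 x1)) (oscale (a1 - a2) z3 - oconj (omul x1 z2))"
    unfolding zhat_formula by (simp add: zero_simps lin2_simps)
  hence p2: "(?f ^^ 5) (hm a1 a2 a3 x1 0 0) = hm 0 0 0 0 0 0"
    unfolding pow5 by (simp only: zh4[OF N])
  show "(Zhat (hm 1 0 0 0 0 0) Z ^^ 5) X = (\<lambda>i j. 0)"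
    unfolding Ze Xe Xsplit Zhat_pow_madd p1 p2 by (simp add: madd_hm zero_hm)
  show "mtr (Zhat (hm 1 0 0 0 0 0) Z X) = 0"
    unfolding Ze Xe zhat_formula mtr_hm by simp
qed


theorem proposition2p3:
  assumes "P \<in> OP2"
    and "Z \<in> TC P"
    and "mtr (Z \<circ>\<^sub>J Z) = 0"
  shows "(\<forall>X \<in> herm0. Zhat P Z X \<in> herm0) \<and> (\<forall>X \<in> herm0. (Zhat P Z ^^ 5) X = (\<lambda>i j. 0))"
proof -
  obtain f where f: "aut f" "f P = hm 1 0 0 0 0 0" using NF[OF assms(1)] by blast
  note a = autD[OF f(1)]
  have hP: "herm P" using assms(1) by (simp add: OP2_def)
  have hZ: "herm Z" and tz: "mscale 2 (jordan P Z) = Z" using assms(2) by (auto simp: TC_def)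
  have hPZ: "herm (jordan P Z)" by (rule herm_jordan[OF hP hZ])
  have "mscale 2 (jordan (hm 1 0 0 0 0 0) (f Z)) = f Z"
    using a(4)[OF hPZ, of 2] a(2)[OF hP hZ] f(2) tz by simp
  hence TZ: "f Z \<in> TC (hm 1 0 0 0 0 0)" using a(1)[OF hZ] by (simp add: TC_def)
  have iso: "mtr (jordan (f Z) (f Z)) = 0"
    using a(2)[OF hZ hZ] a(5)[OF herm_jordan[OF hZ hZ]] assms(3) by simp
  show ?thesis
  proof (intro conjI ballI)
    fix X assume "X \<in> herm0"
    hence hX: "herm X" by (simp add: herm0_def)
    have hZX: "herm (Zhat P Z X)" by (rule herm_Zhat[OF hP hZ hX])
    have "mtr (Zhat P Z X) = mtr (f (Zhat P Z X))" using a(5)[OF hZX] by simp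
    also have "\<dots> = mtr (Zhat (hm 1 0 0 0 0 0) (f Z) (f X))" using aut_Zhat[OF f(1) hP hZ hX] f(2) by simp
    also have "\<dots> = 0" by (rule E11_main(2)[OF TZ iso a(1)[OF hX]])
    finally show "Zhat P Z X \<in> herm0" using hZX by (simp add: herm0_def)
  next
    fix X assume "X \<in> herm0"
    hence hX: "herm X" by (simp add: herm0_def)
    note pw = aut_Zhat_pow[OF f(1) hP hZ hX, of 5]
    have "f ((Zhat P Z ^^ 5) X) = (\<lambda>i j. 0)"
      using pw f(2) E11_main(1)[OF TZ iso a(1)[OF hX]] by simp
    thus "(Zhat P Z ^^ 5) X = (\<lambda>i j. 0)" using a(6) pw by blast
  qed
qed


end
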